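(* Let $\Omega\subset\mathbb{R}^n$ be a bounded open set with $C^2$ boundary. Let $x_i\in\overline\Omega$ with $x_i\to x$ and let $\gamma\in\Gamma$ with $\gamma(0)=x$. Then there exist $\gamma_i\in\Gamma$ with $\gamma_i(0)=x_i$ such that: (i) $\gamma_i\to\gamma$ uniformly on $[0,T]$; (ii) $\dot\gamma_i\to\dot\gamma$ almost everywhere on $[0,T]$; (iii) there is a constant $C\ge 0$ such that $|\dot\gamma_i(t)|\le C|\dot\gamma(t)|$ for all $i\ge1$ and a.e. $t\in[0,T]$.
   Context: $\Gamma=\{\gamma\in AC(0,T;\mathbb{R}^n):\gamma(t)\in\overline\Omega\ \forall t\in[0,T]\}$, where $AC(0,T;\mathbb{R}^n)$ is the space of absolutely continuous functions $[0,T]\to\mathbb{R}^n$ with the uniform metric. *)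

theory Defs
  imports "HOL-Analysis.Analysis"
begin

definition absolutely_continuous_on_interval ::
  "real \<Rightarrow> real \<Rightarrow> (real \<Rightarrow> 'a::real_normed_vector) \<Rightarrow> bool" where
  "absolutely_continuous_on_interval a b f \<longleftrightarrow>
    (\<forall>\<epsilon>>0. \<exists>\<delta>>0. \<forall>D::(real \<times> real) set.
       finite D \<and>
       (\<forall>(u,v)\<in>D. a \<le> u \<and> u \<le> v \<and> v \<le> b) \<and>
       (\<forall>(u,v)\<in>D. \<forall>(u',v')\<in>D. (u,v) \<noteq> (u',v') \<longrightarrow> {u<..<v} \<inter> {u'<..<v'} = {}) \<and>
       (\<Sum>(u,v)\<in>D. v - u) < \<delta>
       \<longrightarrow> (\<Sum>(u,v)\<in>D. norm (f v - f u)) < \<epsilon>)"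

definition Gamma :: "real \<Rightarrow> 'a::euclidean_space set \<Rightarrow> (real \<Rightarrow> 'a) set" where
  "Gamma T \<Omega> = {\<gamma>. absolutely_continuous_on_interval 0 T \<gamma> \<and> (\<forall>t\<in>{0..T}. \<gamma> t \<in> closure \<Omega>)}"

definition C2_on :: "'a::euclidean_space set \<Rightarrow> ('a \<Rightarrow> real) \<Rightarrow> bool" where
  "C2_on U \<phi> \<longleftrightarrow>
    (\<exists>grad :: 'a \<Rightarrow> 'a. \<exists>H :: 'a \<Rightarrow> 'a \<Rightarrow> 'a.
       (\<forall>x\<in>U. (\<phi> has_derivative (\<lambda>h. grad x \<bullet> h)) (at x)) \<and>
       (\<forall>x\<in>U. (grad has_derivative H x) (at x)) \<and>
       (\<forall>v. continuous_on U (\<lambda>x. H x v)))"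

definition C2_boundary :: "'a::euclidean_space set \<Rightarrow> bool" where
  "C2_boundary \<Omega> \<longleftrightarrow>
    (\<forall>p\<in>frontier \<Omega>. \<exists>r>0. \<exists>\<phi>. C2_on (ball p r) \<phi> \<and>
       (\<forall>x\<in>ball p r. \<forall>D. (\<phi> has_derivative D) (at x) \<longrightarrow> D \<noteq> (\<lambda>h. 0)) \<and>
       \<Omega> \<inter> ball p r = {x\<in>ball p r. \<phi> x < 0})"

end

theory Submission
  imports Defs
begin

definition mpos :: "real \<Rightarrow> real" where "mpos u = max 0 u"

lemma mpos_sq_deriv: "((\<lambda>u. (mpos u)\<^sup>2) has_real_derivative 2 * mpos u) (at u)"
proof (cases "u = 0")
  case True
  have "((\<lambda>y. ((mpos y)\<^sup>2 - (mpos 0)\<^sup>2) / (y - 0)) \<longlongrightarrow> 0) (at 0)"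
  proof (rule Lim_null_comparison)
    have "norm (((mpos y)\<^sup>2 - (mpos 0)\<^sup>2) / (y - 0)) \<le> \<bar>y\<bar>" for y
    proof (cases "y \<le> 0")
      case True then show ?thesis by (simp add: mpos_def)
    next
      case False then have "mpos y = y" "mpos 0 = 0" by (auto simp: mpos_def)
      with False show ?thesis by (simp add: power2_eq_square)
    qed
    then show "\<forall>\<^sub>F y in at 0. norm (((mpos y)\<^sup>2 - (mpos 0)\<^sup>2) / (y - 0)) \<le> \<bar>y\<bar>"
      by (simp add: always_eventually)
    show "((\<lambda>y. \<bar>y\<bar>) \<longlongrightarrow> 0) (at (0::real))"
      using tendsto_rabs[OF tendsto_ident_at[of "0::real" UNIV]] by simp
  qed
  moreover have "2 * mpos 0 = 0" by (simp add: mpos_def)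
  ultimately show ?thesis unfolding True has_field_derivative_iff by simp
next
  case False
  show ?thesis
  proof (cases "u > 0")
    case True
    have "((\<lambda>u. u\<^sup>2) has_real_derivative 2 * mpos u) (at u)"
      using True by (auto intro!: derivative_eq_intros simp: mpos_def)
    then show ?thesis
      by (rule has_field_derivative_transform_within_open[of _ _ _ "{0<..}"])
         (use True in \<open>auto simp: mpos_def\<close>)
  next
    case False
    with \<open>u \<noteq> 0\<close> have u: "u < 0" by simp
    have "((\<lambda>u. 0) has_real_derivative 2 * mpos u) (at u)"
      using u by (auto intro!: derivative_eq_intros simp: mpos_def)
    then show ?thesis
      by (rule has_field_derivative_transform_within_open[of _ _ _ "{..<0}"])
         (use u in \<open>auto simp: mpos_def\<close>)
  qed
qed

lemma mpos_eq: "u \<ge> 0 \<Longrightarrow> mpos u = u" by (simp add: mpos_def)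
lemma mpos_eq0: "u \<le> 0 \<Longrightarrow> mpos u = 0" by (simp add: mpos_def)

definition bump :: "'a::real_inner \<Rightarrow> real \<Rightarrow> 'a \<Rightarrow> real" where
  "bump x \<rho> y = (mpos (1 - (norm (y - x))\<^sup>2 / \<rho>\<^sup>2))\<^sup>2"

definition dbump :: "'a::real_inner \<Rightarrow> real \<Rightarrow> 'a \<Rightarrow> 'a \<Rightarrow> real" where
  "dbump x \<rho> y h = - 4 * mpos (1 - (norm (y - x))\<^sup>2 / \<rho>\<^sup>2) * ((y - x) \<bullet> h) / \<rho>\<^sup>2"

lemma bump_deriv: "(bump x \<rho> has_derivative dbump x \<rho> y) (at y within S)"
proof -
  define c where "c = inverse (\<rho>\<^sup>2)"
  have d1: "((\<lambda>y. 1 - c * ((y - x) \<bullet> (y - x))) has_derivative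
      (\<lambda>h. - (c * (h \<bullet> (y - x) + (y - x) \<bullet> h)))) (at y within S)"
    by (auto intro!: derivative_eq_intros)
  have "((\<lambda>u. (mpos u)\<^sup>2) \<circ> (\<lambda>y. 1 - c * ((y - x) \<bullet> (y - x))) has_derivative
     (\<lambda>k. k * (2 * mpos (1 - c * ((y - x) \<bullet> (y - x))))) \<circ> (\<lambda>h. - (c * (h \<bullet> (y - x) + (y - x) \<bullet> h))))
     (at y within S)"
    unfolding o_def
    apply (rule has_derivative_compose[OF d1])
    apply (rule has_derivative_eq_rhs[OF mpos_sq_deriv[unfolded has_field_derivative_def]])
    by (auto simp: fun_eq_iff)
  moreover have "bump x \<rho> = (\<lambda>u. (mpos u)\<^sup>2) \<circ> (\<lambda>y. 1 - c * ((y - x) \<bullet> (y - x)))"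
    by (auto simp: bump_def fun_eq_iff power2_norm_eq_inner c_def divide_inverse mult.commute)
  moreover have "dbump x \<rho> y = (\<lambda>k. k * (2 * mpos (1 - c * ((y - x) \<bullet> (y - x))))) \<circ> (\<lambda>h. - (c * (h \<bullet> (y - x) + (y - x) \<bullet> h)))"
    by (auto simp: dbump_def fun_eq_iff power2_norm_eq_inner c_def divide_inverse inner_commute mult.commute mult.left_commute)
  ultimately show ?thesis by simp
qed

lemma bump_at: "bump x \<rho> x = 1" by (simp add: bump_def mpos_def)
lemma bump_nonneg: "0 \<le> bump x \<rho> y" by (simp add: bump_def)

lemma mpos_le1: "(norm (y - x))\<^sup>2 / \<rho>\<^sup>2 \<ge> 0 \<Longrightarrow> mpos (1 - (norm (y - x))\<^sup>2 / \<rho>\<^sup>2) \<le> 1"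
  by (simp add: mpos_def)

lemma bump_le1: "bump x \<rho> y \<le> 1"
proof -
  have "0 \<le> (norm (y - x))\<^sup>2 / \<rho>\<^sup>2" by simp
  then have "mpos (1 - (norm (y - x))\<^sup>2 / \<rho>\<^sup>2) \<le> 1" "0 \<le> mpos (1 - (norm (y - x))\<^sup>2 / \<rho>\<^sup>2)"
    by (auto simp: mpos_def)
  then show ?thesis unfolding bump_def by (simp add: power_le_one)
qed

lemma bump_zero: assumes "\<rho> > 0" "norm (y - x) \<ge> \<rho>" shows "bump x \<rho> y = 0" "dbump x \<rho> y = (\<lambda>h. 0)"
proof -
  have "\<rho>\<^sup>2 \<le> (norm (y - x))\<^sup>2" using assms by (simp add: power_mono)
  then have "1 \<le> (norm (y - x))\<^sup>2 / \<rho>\<^sup>2" using assms by simp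
  then have "mpos (1 - (norm (y - x))\<^sup>2 / \<rho>\<^sup>2) = 0" by (simp add: mpos_def)
  then show "bump x \<rho> y = 0" "dbump x \<rho> y = (\<lambda>h. 0)" by (auto simp: bump_def dbump_def fun_eq_iff)
qed

lemma dbump_bound: assumes "\<rho> > 0" shows "\<bar>dbump x \<rho> y h\<bar> \<le> 4 / \<rho> * norm h"
proof (cases "norm (y - x) < \<rho>")
  case True
  have m: "0 \<le> mpos (1 - (norm (y - x))\<^sup>2 / \<rho>\<^sup>2)" "mpos (1 - (norm (y - x))\<^sup>2 / \<rho>\<^sup>2) \<le> 1"
    by (auto simp: mpos_def)
  have "\<bar>(y - x) \<bullet> h\<bar> \<le> norm (y - x) * norm h" by (rule Cauchy_Schwarz_ineq2)
  also have "\<dots> \<le> \<rho> * norm h" using True by (simp add: mult_right_mono)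
  finally have c: "\<bar>(y - x) \<bullet> h\<bar> \<le> \<rho> * norm h" .
  have "\<bar>dbump x \<rho> y h\<bar> = 4 * mpos (1 - (norm (y - x))\<^sup>2 / \<rho>\<^sup>2) * \<bar>(y - x) \<bullet> h\<bar> / \<rho>\<^sup>2"
    using m by (simp add: dbump_def abs_mult)
  also have "\<dots> \<le> 4 * 1 * (\<rho> * norm h) / \<rho>\<^sup>2"
    using m c assms by (intro divide_right_mono mult_mono) auto
  also have "\<dots> = 4 / \<rho> * norm h" using assms by (simp add: power2_eq_square)
  finally show ?thesis .
next
  case False
  then show ?thesis using bump_zero[of \<rho> y x] assms by simp
qed

lemma bump_one_minus: assumes "\<rho> > 0" shows "1 - bump x \<rho> y \<le> 2 / \<rho> * norm (y - x)"
proof (cases "norm (y - x) < \<rho>")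
  case True
  let ?s = "(norm (y - x))\<^sup>2 / \<rho>\<^sup>2"
  have s0: "0 \<le> ?s" by simp
  have s1: "?s \<le> norm (y - x) / \<rho>"
  proof -
    have "(norm (y - x))\<^sup>2 \<le> norm (y - x) * \<rho>" using True by (simp add: power2_eq_square mult_left_mono)
    then show ?thesis using assms by (simp add: divide_simps power2_eq_square)
  qed
  have "?s \<le> 1" using s1 True assms by (simp add: divide_le_eq_1)
  then have "mpos (1 - ?s) = 1 - ?s" by (intro mpos_eq) linarith
  then have "bump x \<rho> y = (1 - ?s)\<^sup>2" by (simp add: bump_def)
  then have "1 - bump x \<rho> y = 2 * ?s - ?s\<^sup>2" by (simp add: power2_eq_square algebra_simps)
  also have "\<dots> \<le> 2 * ?s" by simp
  also have "\<dots> \<le> 2 / \<rho> * norm (y - x)" using s1 by simp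
  finally show ?thesis .
next
  case False
  then have "1 \<le> norm (y - x) / \<rho>" using assms by simp
  then show ?thesis using bump_zero[of \<rho> y x] assms False by simp
qed

lemma bump_small: assumes "\<rho> > 0" "bump x \<rho> y < 1/4" shows "norm (y - x) > \<rho> / 2"
proof (rule ccontr)
  assume "\<not> ?thesis"
  then have "norm (y - x) \<le> \<rho>/2" by simp
  then have "(norm (y - x))\<^sup>2 \<le> (\<rho>/2)\<^sup>2" by (simp add: power_mono)
  then have s: "(norm (y - x))\<^sup>2 / \<rho>\<^sup>2 \<le> 1/4" using assms by (simp add: divide_simps power2_eq_square)
  then have "mpos (1 - (norm (y - x))\<^sup>2 / \<rho>\<^sup>2) = 1 - (norm (y - x))\<^sup>2 / \<rho>\<^sup>2"
    by (intro mpos_eq) linarith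
  then have "bump x \<rho> y = (1 - (norm (y - x))\<^sup>2 / \<rho>\<^sup>2)\<^sup>2" by (simp add: bump_def)
  also have "\<dots> \<ge> (3/4)\<^sup>2" using s by (intro power_mono) auto
  finally show False using assms by (simp add: power2_eq_square)
qed

locale pert =
  fixes \<Phi> :: "'a::euclidean_space \<Rightarrow> 'a" and D :: "'a \<Rightarrow> 'a \<Rightarrow> 'a" and \<delta> :: real
  assumes dPhi: "\<And>y. (\<Phi> has_derivative D y) (at y)"
    and dD: "\<And>y h. norm (D y h - h) \<le> \<delta> * norm h"
    and d0: "0 \<le> \<delta>" and d1: "\<delta> \<le> 1/2"
begin

lemma lin: "linear (D y)"
  using dPhi[of y] has_derivative_linear by blast

lemma Dbound: "norm (D y h) \<le> (1 + \<delta>) * norm h"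
proof -
  have "norm (D y h) \<le> norm h + norm (D y h - h)" by (metis norm_triangle_sub add.commute)
  then show ?thesis using dD[of y h] by (simp add: algebra_simps)
qed

lemma lip: "norm (\<Phi> a - \<Phi> b) \<le> (1 + \<delta>) * norm (a - b)"
proof (rule differentiable_bound[of UNIV])
  show "\<And>x. x \<in> UNIV \<Longrightarrow> (\<Phi> has_derivative D x) (at x within UNIV)" using dPhi by simp
  show "\<And>x. x \<in> UNIV \<Longrightarrow> onorm (D x) \<le> 1 + \<delta>" by (rule onorm_le) (simp add: Dbound)
qed auto

lemma lip2: "norm ((\<Phi> a - a) - (\<Phi> b - b)) \<le> \<delta> * norm (a - b)"
proof (rule differentiable_bound[of UNIV "\<lambda>y. \<Phi> y - y" "\<lambda>y h. D y h - h"])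
  show "\<And>x. x \<in> UNIV \<Longrightarrow> ((\<lambda>y. \<Phi> y - y) has_derivative (\<lambda>h. D x h - h)) (at x within UNIV)"
    using dPhi by (auto intro!: derivative_eq_intros)
  show "\<And>x. x \<in> UNIV \<Longrightarrow> onorm (\<lambda>h. D x h - h) \<le> \<delta>" by (rule onorm_le) (simp add: dD)
qed auto

lemma lower: "norm (a - b) \<le> 2 * norm (\<Phi> a - \<Phi> b)"
proof -
  have "norm (a - b) \<le> norm (\<Phi> a - \<Phi> b) + norm ((\<Phi> a - a) - (\<Phi> b - b))"
  proof -
    have e: "a - b = (\<Phi> a - \<Phi> b) - ((\<Phi> a - a) - (\<Phi> b - b))" by simp
    show ?thesis by (subst e) (rule norm_triangle_ineq4)
  qed
  also have "\<dots> \<le> norm (\<Phi> a - \<Phi> b) + \<delta> * norm (a - b)" using lip2 by simp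
  finally have "(1 - \<delta>) * norm (a - b) \<le> norm (\<Phi> a - \<Phi> b)" by (simp add: algebra_simps)
  moreover have "(1/2) * norm (a - b) \<le> (1 - \<delta>) * norm (a - b)" using d1 by (intro mult_right_mono) auto
  ultimately show ?thesis by simp
qed

lemma injPhi: "inj \<Phi>"
proof (rule injI)
  fix a b assume "\<Phi> a = \<Phi> b"
  then show "a = b" using lower[of a b] by simp
qed

lemma surjPhi: "surj \<Phi>"
proof -
  have "\<exists>y. \<Phi> y = z" for z
  proof -
    have "\<exists>!y. z + y - \<Phi> y = y"
    proof (rule banach_fix_type[of \<delta>])
      show "0 \<le> \<delta>" "\<delta> < 1" using d0 d1 by auto
      show "\<forall>x y. dist (z + x - \<Phi> x) (z + y - \<Phi> y) \<le> \<delta> * dist x y"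
      proof (intro allI)
        fix x y
        have "dist (z + x - \<Phi> x) (z + y - \<Phi> y) = norm ((\<Phi> x - x) - (\<Phi> y - y))"
          by (simp add: dist_norm norm_minus_commute algebra_simps)
        then show "dist (z + x - \<Phi> x) (z + y - \<Phi> y) \<le> \<delta> * dist x y" using lip2 by (simp add: dist_norm)
      qed
    qed
    then obtain y where "z + y - \<Phi> y = y" by blast
    then have "\<Phi> y = z" by (simp add: algebra_simps)
    then show ?thesis by blast
  qed
  then show ?thesis by (metis surjI)
qed

definition "ginv = inv \<Phi>"

lemma ginv1: "\<Phi> (ginv z) = z" unfolding ginv_def using surjPhi by (rule surj_f_inv_f)
lemma ginv2: "ginv (\<Phi> y) = y" unfolding ginv_def using injPhi by (rule inv_f_f)

lemma ginv_cont: "continuous (at z) ginv"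
proof -
  have "norm (ginv a - ginv b) \<le> 2 * norm (a - b)" for a b
    using lower[of "ginv a" "ginv b"] by (simp add: ginv1)
  then have "2-lipschitz_on UNIV ginv" by (intro lipschitz_onI) (auto simp: dist_norm)
  then have "continuous_on UNIV ginv" by (rule lipschitz_on_continuous_on)
  then show ?thesis using continuous_on_eq_continuous_at[OF open_UNIV] by blast
qed

lemma ginv_diff: "ginv differentiable (at z)"
proof -
  define y where "y = ginv z"
  have zy: "z = \<Phi> y" using ginv1 y_def by simp
  have "inj (D y)"
  proof (rule linear_injective_0[THEN iffD2, OF lin], intro allI impI)
    fix h assume "D y h = 0"
    then have "norm h \<le> \<delta> * norm h" using dD[of y h] by simp
    moreover have "\<delta> * norm h \<le> (1/2) * norm h" using d1 by (intro mult_right_mono) auto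
    ultimately have "norm h \<le> 0" by linarith
    then show "h = 0" by simp
  qed
  then obtain g' where g': "linear g'" "g' \<circ> D y = id" using linear_injective_left_inverse lin by metis
  have "(ginv has_derivative g') (at z)"
  proof (rule has_derivative_inverse_basic[of \<Phi> "D y" ginv z g' UNIV])
    show "(\<Phi> has_derivative D y) (at (ginv z))" using dPhi y_def by simp
    show "bounded_linear g'" using g' linear_conv_bounded_linear by blast
  qed (use g' ginv_cont ginv1 in auto)
  then show ?thesis by (rule differentiableI)
qed

lemma vd_diff:
  fixes \<gamma> :: "real \<Rightarrow> 'a"
  assumes "(\<gamma> has_vector_derivative v) (at t)"
  shows "((\<Phi> \<circ> \<gamma>) has_vector_derivative D (\<gamma> t) v) (at t)"
proof -
  have "((\<lambda>s. \<Phi> (\<gamma> s)) has_derivative (\<lambda>s. D (\<gamma> t) (s *\<^sub>R v))) (at t)"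
    using has_derivative_compose[OF assms[unfolded has_vector_derivative_def] dPhi] .
  moreover have "(\<lambda>s. D (\<gamma> t) (s *\<^sub>R v)) = (\<lambda>s. s *\<^sub>R D (\<gamma> t) v)"
    using lin[of "\<gamma> t"] by (simp add: linear_scale fun_eq_iff)
  ultimately show ?thesis by (simp add: has_vector_derivative_def o_def)
qed

lemma vd_nondiff:
  fixes \<gamma> :: "real \<Rightarrow> 'a"
  assumes "\<not> \<gamma> differentiable (at t)"
  shows "vector_derivative (\<Phi> \<circ> \<gamma>) (at t) = vector_derivative \<gamma> (at t)"
proof -
  have nd: "\<not> (\<Phi> \<circ> \<gamma>) differentiable (at t)"
  proof
    assume "(\<Phi> \<circ> \<gamma>) differentiable (at t)"
    then have "(ginv \<circ> (\<Phi> \<circ> \<gamma>)) differentiable (at t)"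
      using differentiable_chain_at ginv_diff by blast
    moreover have "ginv \<circ> (\<Phi> \<circ> \<gamma>) = \<gamma>" by (simp add: fun_eq_iff ginv2)
    ultimately show False using assms by simp
  qed
  have "(\<lambda>f'. ((\<Phi> \<circ> \<gamma>) has_vector_derivative f') (at t)) = (\<lambda>f'. (\<gamma> has_vector_derivative f') (at t))"
    using nd assms differentiableI_vector by blast
  then show ?thesis by (simp add: vector_derivative_def)
qed

end

locale bsetup =
  fixes \<Omega> :: "'a::euclidean_space set" and x :: 'a and r :: real and \<phi> :: "'a \<Rightarrow> real"
    and grad :: "'a \<Rightarrow> 'a" and H :: "'a \<Rightarrow> 'a \<Rightarrow> 'a"
  assumes r: "r > 0"
   and dphi: "\<And>y. y \<in> ball x r \<Longrightarrow> (\<phi> has_derivative (\<lambda>h. grad y \<bullet> h)) (at y)"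
   and dgrad: "\<And>y. y \<in> ball x r \<Longrightarrow> (grad has_derivative H y) (at y)"
   and cH: "\<And>v. continuous_on (ball x r) (\<lambda>y. H y v)"
   and gnz: "\<And>y. y \<in> ball x r \<Longrightarrow> grad y \<noteq> 0"
   and Oeq: "\<Omega> \<inter> ball x r = {y \<in> ball x r. \<phi> y < 0}"
   and xcl: "x \<in> closure \<Omega>" and xnO: "x \<notin> \<Omega>"
begin

lemma phi_cont: "continuous_on (ball x r) \<phi>"
proof -
  have "\<forall>y\<in>ball x r. \<phi> differentiable (at y)" using dphi differentiableI by blast
  then show ?thesis using differentiable_imp_continuous_on differentiable_at_imp_differentiable_on by blast
qed

lemma phi_cont_at: "y \<in> ball x r \<Longrightarrow> isCont \<phi> y"
  using phi_cont continuous_on_eq_continuous_at[OF open_ball] by blast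

lemma clos_le: assumes "y \<in> closure \<Omega>" "y \<in> ball x r" shows "\<phi> y \<le> 0"
proof (rule ccontr)
  assume "\<not> \<phi> y \<le> 0"
  then have pos: "\<phi> y > 0" by simp
  have "\<forall>\<^sub>F z in at y. \<phi> z > 0"
    using order_tendstoD(1)[OF phi_cont_at[OF assms(2), unfolded isCont_def] pos] .
  moreover have "\<forall>\<^sub>F z in at y. z \<in> ball x r"
    using eventually_at_topological assms(2) open_ball by blast
  ultimately have "\<forall>\<^sub>F z in at y. \<phi> z > 0 \<and> z \<in> ball x r" by (rule eventually_conj)
  then obtain e where e: "e > 0" and he: "\<And>z. z \<noteq> y \<Longrightarrow> dist z y < e \<Longrightarrow> \<phi> z > 0 \<and> z \<in> ball x r"
    unfolding eventually_at by blast
  have py: "\<phi> y > 0 \<and> y \<in> ball x r" using pos assms by simp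
  obtain z where z: "z \<in> \<Omega>" "dist z y < e" using assms(1) e closure_approachable by blast
  then have "\<phi> z > 0 \<and> z \<in> ball x r" using he py by (cases "z = y") auto
  then have "\<phi> z < 0" using z Oeq by blast
  then show False using \<open>\<phi> z > 0 \<and> z \<in> ball x r\<close> by simp
qed

lemma le_clos: assumes "y \<in> ball x r" "\<phi> y \<le> 0" shows "y \<in> closure \<Omega>"
proof (cases "\<phi> y < 0")
  case True
  then have "y \<in> \<Omega>" using Oeq assms by blast
  then show ?thesis by (simp add: closure_def)
next
  case False
  then have z: "\<phi> y = 0" using assms by simp
  define g where "g = grad y"
  have g: "g \<noteq> 0" using gnz assms g_def by simp
  have d1: "((\<lambda>t. y + t *\<^sub>R (- g)) has_derivative (\<lambda>t. t *\<^sub>R (- g))) (at 0)"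
    by (auto intro!: derivative_eq_intros)
  have dy: "(\<phi> has_derivative (\<lambda>h. grad y \<bullet> h)) (at (y + 0 *\<^sub>R (- g)))" using dphi[OF assms(1)] by simp
  have "((\<lambda>t. \<phi> (y + t *\<^sub>R (- g))) has_derivative (\<lambda>t. grad y \<bullet> (t *\<^sub>R (- g)))) (at 0)"
    using has_derivative_compose[OF d1 dy] .
  then have "((\<lambda>t. \<phi> (y + t *\<^sub>R (- g))) has_derivative (\<lambda>t. (- (g \<bullet> g)) * t)) (at 0)"
    by (rule has_derivative_eq_rhs) (auto simp: fun_eq_iff g_def)
  then have D: "((\<lambda>t. \<phi> (y + t *\<^sub>R (- g))) has_real_derivative (- (g \<bullet> g))) (at 0)"
    unfolding has_field_derivative_def by (rule has_derivative_eq_rhs) (simp add: fun_eq_iff)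
  have neg: "- (g \<bullet> g) < 0" using g by simp
  obtain d where d: "d > 0" and hd: "\<And>h. h > 0 \<Longrightarrow> h < d \<Longrightarrow> \<phi> (y + (0 + h) *\<^sub>R (- g)) < \<phi> (y + 0 *\<^sub>R (- g))"
    using DERIV_neg_dec_right[OF D neg] by blast
  show ?thesis
  proof (rule closure_approachable[THEN iffD2], intro allI impI)
    fix e :: real assume e: "e > 0"
    obtain r0 where r0: "r0 > 0" "ball y r0 \<subseteq> ball x r" using assms(1) open_ball open_contains_ball by blast
    define h where "h = min (d/2) (min (e / (2 * norm g)) (r0 / (2 * norm g)))"
    have h0: "h > 0" "h < d" using d e r0 g by (auto simp: h_def)
    have hn: "h * norm g < e" "h * norm g < r0"
    proof -
      have "h * norm g \<le> (e / (2 * norm g)) * norm g" using g h0 by (intro mult_right_mono) (auto simp: h_def)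
      also have "\<dots> < e" using g e by (simp add: field_simps)
      finally show "h * norm g < e" .
      have "h * norm g \<le> (r0 / (2 * norm g)) * norm g" using g h0 by (intro mult_right_mono) (auto simp: h_def)
      also have "\<dots> < r0" using g r0 by (simp add: field_simps)
      finally show "h * norm g < r0" .
    qed
    define z where "z = y + h *\<^sub>R (- g)"
    have dz: "dist z y = h * norm g" using h0 by (simp add: z_def dist_norm)
    have "z \<in> ball y r0" using hn dz by (simp add: dist_commute)
    then have "z \<in> ball x r" using r0 by blast
    moreover have "\<phi> z < 0" using hd[OF h0] z by (simp add: z_def)
    ultimately have "z \<in> \<Omega>" using Oeq by blast
    moreover have "dist z y < e" using dz hn by simp
    ultimately show "\<exists>z\<in>\<Omega>. dist z y < e" by blast
  qed
qed

lemma phix: "\<phi> x = 0"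
proof -
  have xb: "x \<in> ball x r" using r by simp
  have "\<phi> x \<le> 0" using clos_le[OF xcl xb] .
  moreover have "\<not> \<phi> x < 0" using Oeq xnO xb by blast
  ultimately show ?thesis by simp
qed

lemma Hlin: "y \<in> ball x r \<Longrightarrow> linear (H y)"
  using dgrad has_derivative_linear by blast

lemma Hbound: "\<exists>M\<ge>0. \<forall>y\<in>cball x (r/2). \<forall>h. norm (H y h) \<le> M * norm h"
proof -
  have sub: "cball x (r/2) \<subseteq> ball x r" using r by (auto simp: subset_eq)
  have "\<exists>B. \<forall>y\<in>cball x (r/2). norm (H y b) \<le> B" for b
  proof -
    have "compact ((\<lambda>y. H y b) ` cball x (r/2))"
      by (rule compact_continuous_image[OF continuous_on_subset[OF cH sub] compact_cball])
    then obtain B where "\<forall>z\<in>(\<lambda>y. H y b) ` cball x (r/2). norm z \<le> B"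
      using compact_imp_bounded bounded_iff by metis
    then show ?thesis by auto
  qed
  then obtain Bf where Bf: "\<And>b y. y \<in> cball x (r/2) \<Longrightarrow> norm (H y b) \<le> Bf b" by metis
  define M where "M = (\<Sum>b\<in>Basis. Bf b)"
  have Bf0: "Bf b \<ge> 0" for b using Bf[of x b] r by (meson centre_in_cball less_eq_real_def half_gt_zero norm_ge_zero order_trans)
  have "norm (H y h) \<le> M * norm h" if y: "y \<in> cball x (r/2)" for y h
  proof -
    have lin: "linear (H y)" using Hlin sub y by blast
    have "H y h = H y (\<Sum>b\<in>Basis. (h \<bullet> b) *\<^sub>R b)" by (simp add: euclidean_representation)
    also have "\<dots> = (\<Sum>b\<in>Basis. (h \<bullet> b) *\<^sub>R H y b)" using lin by (simp add: linear_sum linear_scale)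
    finally have eq: "H y h = (\<Sum>b\<in>Basis. (h \<bullet> b) *\<^sub>R H y b)" .
    have "norm (H y h) = norm (\<Sum>b\<in>Basis. (h \<bullet> b) *\<^sub>R H y b)" using eq by simp
    also have "\<dots> \<le> (\<Sum>b\<in>Basis. norm ((h \<bullet> b) *\<^sub>R H y b))" by (rule norm_sum)
    also have "\<dots> \<le> (\<Sum>b\<in>Basis. norm h * Bf b)"
    proof (rule sum_mono)
      fix b :: 'a assume b: "b \<in> Basis"
      have "norm ((h \<bullet> b) *\<^sub>R H y b) = \<bar>h \<bullet> b\<bar> * norm (H y b)" by simp
      also have "\<dots> \<le> norm h * Bf b" using Basis_le_norm[OF b, of h] Bf[OF y, of b]
        by (intro mult_mono) auto
      finally show "norm ((h \<bullet> b) *\<^sub>R H y b) \<le> norm h * Bf b" .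
    qed
    also have "\<dots> = M * norm h" by (simp add: M_def sum_distrib_left mult.commute)
    finally show ?thesis .
  qed
  moreover have "M \<ge> 0" unfolding M_def using Bf0 by (simp add: sum_nonneg)
  ultimately show ?thesis by blast
qed

end

locale bsetup2 = bsetup +
  fixes M :: real
  assumes M0: "M \<ge> 0" and MH: "\<And>y h. y \<in> cball x (r/2) \<Longrightarrow> norm (H y h) \<le> M * norm h"
begin

definition "Lc = M + 1"
definition "G = norm (grad x) + Lc * (r/2)"

lemma Lc1: "Lc \<ge> 1" using M0 by (simp add: Lc_def)
lemma G0: "G \<ge> 0" using Lc1 r by (simp add: G_def)

lemma cb_sub: "cball x (r/2) \<subseteq> ball x r" using r by (auto simp: subset_eq)

lemma grad_lip: assumes "y \<in> cball x (r/2)" "z \<in> cball x (r/2)"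
  shows "norm (grad y - grad z) \<le> Lc * norm (y - z)"
proof (rule differentiable_bound[of "cball x (r/2)" grad H])
  show "\<And>y. y \<in> cball x (r/2) \<Longrightarrow> (grad has_derivative H y) (at y within cball x (r/2))"
    using dgrad cb_sub has_derivative_at_withinI by blast
  show "\<And>y. y \<in> cball x (r/2) \<Longrightarrow> onorm (H y) \<le> Lc"
  proof (rule onorm_le)
    fix y h assume "y \<in> cball x (r/2)"
    then have "norm (H y h) \<le> M * norm h" by (rule MH)
    also have "\<dots> \<le> Lc * norm h" by (intro mult_right_mono) (auto simp: Lc_def)
    finally show "norm (H y h) \<le> Lc * norm h" .
  qed
qed (use assms in auto)

lemma grad_bd: assumes "y \<in> cball x (r/2)" shows "norm (grad y) \<le> G"
proof -
  have "norm (grad y) \<le> norm (grad x) + norm (grad y - grad x)" by (metis norm_triangle_sub add.commute)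
  also have "\<dots> \<le> norm (grad x) + Lc * norm (y - x)" using grad_lip[OF assms, of x] r by simp
  also have "\<dots> \<le> norm (grad x) + Lc * (r/2)" using assms Lc1 by (intro add_left_mono mult_left_mono) (auto simp: dist_norm norm_minus_commute)
  finally show ?thesis by (simp add: G_def)
qed

lemma inner_onorm: fixes g :: 'a shows "onorm (\<lambda>h. g \<bullet> h) \<le> norm g"
  by (rule onorm_le) (simp add: Cauchy_Schwarz_ineq2)

lemma phi_lip: assumes "y \<in> cball x (r/2)" "z \<in> cball x (r/2)"
  shows "\<bar>\<phi> y - \<phi> z\<bar> \<le> G * norm (y - z)"
proof -
  have "norm (\<phi> y - \<phi> z) \<le> G * norm (y - z)"
  proof (rule differentiable_bound[of "cball x (r/2)" \<phi> "\<lambda>y h. grad y \<bullet> h"])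
    show "\<And>y. y \<in> cball x (r/2) \<Longrightarrow> (\<phi> has_derivative (\<lambda>h. grad y \<bullet> h)) (at y within cball x (r/2))"
      using dphi cb_sub has_derivative_at_withinI by blast
    show "\<And>y. y \<in> cball x (r/2) \<Longrightarrow> onorm (\<lambda>h. grad y \<bullet> h) \<le> G"
      using inner_onorm grad_bd order_trans by blast
  qed (use assms in auto)
  then show ?thesis by simp
qed

lemma lin_est:
  assumes seg: "\<And>t. t \<in> {0..1} \<Longrightarrow> a + t *\<^sub>R (b - a) \<in> cball x (r/2)"
    and x0: "x0 \<in> cball x (r/2)"
    and W: "\<And>t. t \<in> {0..1} \<Longrightarrow> norm (a + t *\<^sub>R (b - a) - x0) \<le> W"
  shows "\<bar>\<phi> b - \<phi> a - grad x0 \<bullet> (b - a)\<bar> \<le> norm (b - a) * (Lc * W)"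
proof -
  define S where "S = {a + t *\<^sub>R (b - a) | t. t \<in> {0..1}} \<union> {x0}"
  have Ssub: "S \<subseteq> cball x (r/2)" using seg x0 by (auto simp: S_def)
  have W0: "W \<ge> 0" using W[of 0] by (meson atLeastAtMost_iff norm_ge_zero order_trans zero_le_one order_refl)
  have "norm (\<phi> b - \<phi> a - (\<lambda>h. grad x0 \<bullet> h) (b - a)) \<le> norm (b - a) * (Lc * W)"
  proof (rule differentiable_bound_linearization[of a b S \<phi> "\<lambda>y h. grad y \<bullet> h" x0 "Lc * W"])
    show "\<And>t. t \<in> {0..1} \<Longrightarrow> a + t *\<^sub>R (b - a) \<in> S" by (auto simp: S_def)
    show "\<And>y. y \<in> S \<Longrightarrow> (\<phi> has_derivative (\<lambda>h. grad y \<bullet> h)) (at y within S)"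
      using dphi cb_sub Ssub has_derivative_at_withinI by blast
    show "x0 \<in> S" by (simp add: S_def)
    show "onorm ((\<lambda>h. grad y \<bullet> h) - (\<lambda>h. grad x0 \<bullet> h)) \<le> Lc * W" if y: "y \<in> S" for y
    proof -
      have "onorm ((\<lambda>h. grad y \<bullet> h) - (\<lambda>h. grad x0 \<bullet> h)) = onorm (\<lambda>h. (grad y - grad x0) \<bullet> h)"
        by (simp add: fun_diff_def inner_diff_left)
      also have "\<dots> \<le> norm (grad y - grad x0)" by (rule inner_onorm)
      also have "\<dots> \<le> Lc * norm (y - x0)" using grad_lip Ssub y x0 by blast
      also have "\<dots> \<le> Lc * W"
      proof (cases "y = x0")
        case True then show ?thesis using W0 Lc1 by simp
      next
        case False
        then obtain t where "t \<in> {0..1}" "y = a + t *\<^sub>R (b - a)" using y by (auto simp: S_def)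
        then show ?thesis using W Lc1 by (intro mult_left_mono) auto
      qed
      finally show ?thesis .
    qed
  qed
  then show ?thesis by simp
qed

end

context bsetup2 begin
definition "nn = norm (grad x)"
definition "N2 = grad x \<bullet> grad x"
lemma nn0: "nn > 0" using gnz[of x] r by (simp add: nn_def)
lemma N2nn: "N2 = nn\<^sup>2" by (simp add: N2_def nn_def power2_norm_eq_inner)
lemma N20: "N2 > 0" using nn0 N2nn by simp
end

locale bcon = bsetup2 +
  fixes \<rho> K :: real and v :: 'a
  assumes \<rho>0: "\<rho> > 0" and \<rho>R: "\<rho> \<le> r/8"
    and \<rho>n: "3 * Lc * nn * \<rho> \<le> N2 / 4"
    and K0: "K \<ge> 0"
    and K1: "24 * Lc * nn * (Lc + 8 * G / \<rho>) \<le> (N2/2)\<^sup>2 * K"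
    and K2: "24 * Lc * nn * G / \<rho> \<le> (N2/2)\<^sup>2 * K"
    and v1: "norm v \<le> \<rho>/4"
    and v2: "Lc * norm v * nn \<le> N2/2"
    and v3: "(2 * (Lc + 8 * G / \<rho>) / N2 + K * \<rho>) * nn * norm v \<le> 1"
    and xv: "x + v \<in> closure \<Omega>"
begin

definition "c1 = Lc + 8 * G / \<rho>"
definition "n = grad x"
definition "q y = bump x \<rho> y"
definition "w y = y + q y *\<^sub>R v"
definition "A = \<phi> (x + v) - \<phi> x"
definition "\<kappa> = grad (x + v) \<bullet> n"
definition "DDf y = \<phi> (w y) - \<phi> y - q y * A"
definition "\<mu> y = DDf y / \<kappa> + K * norm v * q y * ((y - x) \<bullet> (y - x))"
definition "\<Phi> y = w y - \<mu> y *\<^sub>R n"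
definition "Dq y h = dbump x \<rho> y h"
definition "DDd y h = grad (w y) \<bullet> (h + Dq y h *\<^sub>R v) - grad y \<bullet> h - Dq y h * A"
definition "D\<mu> y h = DDd y h / \<kappa> + K * norm v * (Dq y h * ((y - x) \<bullet> (y - x)) + q y * (2 * ((y - x) \<bullet> h)))"
definition "D\<Phi> y h = h + Dq y h *\<^sub>R v - D\<mu> y h *\<^sub>R n"

lemma c1_0: "c1 \<ge> 0" using Lc1 G0 \<rho>0 by (simp add: c1_def)
lemma r0: "r > 0" by (rule r)
lemma xv_cb: "x + v \<in> cball x (r/2)" using v1 \<rho>R \<rho>0 by (simp add: dist_norm)
lemma xv_b: "x + v \<in> ball x r" using xv_cb cb_sub by blast
lemma x_cb: "x \<in> cball x (r/2)" using r by simp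

lemma A_le: "A \<le> 0" using clos_le[OF xv xv_b] phix by (simp add: A_def)
lemma A_bd: "\<bar>A\<bar> \<le> G * norm v" using phi_lip[OF xv_cb x_cb] by (simp add: A_def)

lemma \<kappa>_ge: "\<kappa> \<ge> N2/2"
proof -
  have "\<kappa> = N2 + (grad (x + v) - grad x) \<bullet> grad x" by (simp add: \<kappa>_def n_def N2_def inner_diff_left)
  moreover have "\<bar>(grad (x + v) - grad x) \<bullet> grad x\<bar> \<le> Lc * norm v * nn"
  proof -
    have "\<bar>(grad (x + v) - grad x) \<bullet> grad x\<bar> \<le> norm (grad (x + v) - grad x) * nn"
      by (simp add: Cauchy_Schwarz_ineq2 nn_def)
    also have "\<dots> \<le> Lc * norm v * nn" using grad_lip[OF xv_cb x_cb] nn0 by (intro mult_right_mono) auto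
    finally show ?thesis .
  qed
  ultimately show ?thesis using v2 by linarith
qed
lemma \<kappa>0: "\<kappa> > 0" using \<kappa>_ge N20 by linarith

lemma q01: "0 \<le> q y" "q y \<le> 1" by (simp_all add: q_def bump_nonneg bump_le1)

lemma outside: assumes "norm (y - x) \<ge> \<rho>"
  shows "q y = 0" "\<Phi> y = y" "D\<Phi> y = (\<lambda>h. h)"
proof -
  show q: "q y = 0" using bump_zero[OF \<rho>0 assms] by (simp add: q_def)
  have dq: "Dq y h = 0" for h using bump_zero[OF \<rho>0 assms] by (simp add: Dq_def)
  show "\<Phi> y = y" by (simp add: \<Phi>_def \<mu>_def DDf_def w_def q)
  show "D\<Phi> y = (\<lambda>h. h)" by (simp add: fun_eq_iff D\<Phi>_def D\<mu>_def DDd_def w_def q dq)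
qed

lemma at_x: "\<Phi> x = x + v"
  by (simp add: \<Phi>_def \<mu>_def DDf_def w_def q_def bump_at A_def)

lemma w_near: assumes "norm (y - x) < r/2" shows "w y \<in> ball x r"
proof -
  have e: "w y - x = (y - x) + q y *\<^sub>R v" by (simp add: w_def algebra_simps)
  have "norm (w y - x) \<le> norm (y - x) + norm (q y *\<^sub>R v)" unfolding e by (rule norm_triangle_ineq)
  also have "\<dots> \<le> norm (y - x) + norm v" using q01[of y] by (simp add: mult_left_le_one_le abs_of_nonneg)
  finally have "norm (w y - x) < r" using assms v1 \<rho>R \<rho>0 by linarith
  then show ?thesis by (simp add: dist_norm norm_minus_commute)
qed

lemma dDD_lem: assumes "norm (y - x) < r/2" shows "(DDf has_derivative DDd y) (at y)"
proof -
  have dq: "(q has_derivative Dq y) (at y)" unfolding q_def[abs_def] Dq_def[abs_def] by (rule bump_deriv)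
  have dw: "(w has_derivative (\<lambda>h. h + Dq y h *\<^sub>R v)) (at y)"
    unfolding w_def[abs_def] by (auto intro!: derivative_eq_intros dq)
  have dphiw: "(\<phi> has_derivative (\<lambda>h. grad (w y) \<bullet> h)) (at (w y))" using dphi w_near[OF assms] by blast
  have dpw: "((\<lambda>y. \<phi> (w y)) has_derivative (\<lambda>h. grad (w y) \<bullet> (h + Dq y h *\<^sub>R v))) (at y)"
    using has_derivative_compose[OF dw dphiw] .
  have dphiy: "(\<phi> has_derivative (\<lambda>h. grad y \<bullet> h)) (at y)" using dphi assms r by (simp add: dist_norm norm_minus_commute)
  show "(DDf has_derivative DDd y) (at y)"
    unfolding DDf_def[abs_def] DDd_def[abs_def]
    by (auto intro!: derivative_eq_intros dpw dphiy dq)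
qed

lemma deriv_in: assumes "norm (y - x) < r/2" shows "(\<Phi> has_derivative D\<Phi> y) (at y)"
proof -
  have dq: "(q has_derivative Dq y) (at y)" unfolding q_def[abs_def] Dq_def[abs_def] by (rule bump_deriv)
  have dw: "(w has_derivative (\<lambda>h. h + Dq y h *\<^sub>R v)) (at y)"
    unfolding w_def[abs_def] by (auto intro!: derivative_eq_intros dq)
  have dphiw: "(\<phi> has_derivative (\<lambda>h. grad (w y) \<bullet> h)) (at (w y))" using dphi w_near[OF assms] by blast
  have dpw: "((\<lambda>y. \<phi> (w y)) has_derivative (\<lambda>h. grad (w y) \<bullet> (h + Dq y h *\<^sub>R v))) (at y)"
    using has_derivative_compose[OF dw dphiw] .
  have dphiy: "(\<phi> has_derivative (\<lambda>h. grad y \<bullet> h)) (at y)" using dphi assms r by (simp add: dist_norm norm_minus_commute)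
  have dDD: "(DDf has_derivative DDd y) (at y)"
    unfolding DDf_def[abs_def] DDd_def[abs_def]
    by (auto intro!: derivative_eq_intros dpw dphiy dq)
  have d_in: "((\<lambda>y. (y - x) \<bullet> (y - x)) has_derivative (\<lambda>h. 2 * ((y - x) \<bullet> h))) (at y)"
  proof -
    have "((\<lambda>y. (y - x) \<bullet> (y - x)) has_derivative (\<lambda>h. h \<bullet> (y - x) + (y - x) \<bullet> h)) (at y)"
      by (auto intro!: derivative_eq_intros)
    then show ?thesis by (rule has_derivative_eq_rhs) (auto simp: fun_eq_iff inner_commute)
  qed
  have d2: "((\<lambda>y. q y * ((y - x) \<bullet> (y - x))) has_derivative
      (\<lambda>h. q y * (2 * ((y - x) \<bullet> h)) + Dq y h * ((y - x) \<bullet> (y - x)))) (at y)"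
    using has_derivative_mult[OF dq d_in] .
  have d3: "((\<lambda>y. (K * norm v) * (q y * ((y - x) \<bullet> (y - x)))) has_derivative
      (\<lambda>h. (K * norm v) * (q y * (2 * ((y - x) \<bullet> h)) + Dq y h * ((y - x) \<bullet> (y - x))))) (at y)"
    using has_derivative_mult_right[OF d2] .
  have d4: "((\<lambda>y. inverse \<kappa> * DDf y) has_derivative (\<lambda>h. inverse \<kappa> * DDd y h)) (at y)"
    using has_derivative_mult_right[OF dDD] .
  note d5 = has_derivative_add[OF d4 d3]
  have e1: "\<mu> = (\<lambda>y. inverse \<kappa> * DDf y + (K * norm v) * (q y * ((y - x) \<bullet> (y - x))))"
    by (simp add: fun_eq_iff \<mu>_def divide_inverse mult.commute mult.left_commute)
  have e2: "D\<mu> y = (\<lambda>h. inverse \<kappa> * DDd y h + (K * norm v) * (q y * (2 * ((y - x) \<bullet> h)) + Dq y h * ((y - x) \<bullet> (y - x))))"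
    by (simp add: fun_eq_iff D\<mu>_def divide_inverse algebra_simps)
  have dmu: "(\<mu> has_derivative D\<mu> y) (at y)"
    unfolding e1 e2 by (rule d5)
  have "((\<lambda>y. w y - \<mu> y *\<^sub>R n) has_derivative (\<lambda>h. (h + Dq y h *\<^sub>R v) - D\<mu> y h *\<^sub>R n)) (at y)"
    using has_derivative_diff[OF dw has_derivative_scaleR_left[OF dmu]] .
  moreover have "\<Phi> = (\<lambda>y. w y - \<mu> y *\<^sub>R n)" by (simp add: fun_eq_iff \<Phi>_def)
  moreover have "D\<Phi> y = (\<lambda>h. (h + Dq y h *\<^sub>R v) - D\<mu> y h *\<^sub>R n)" by (simp add: fun_eq_iff D\<Phi>_def)
  ultimately show ?thesis by simp
qed

lemma deriv_all: "(\<Phi> has_derivative D\<Phi> y) (at y)"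
proof (cases "norm (y - x) < r/2")
  case True then show ?thesis by (rule deriv_in)
next
  case False
  then have yo: "norm (y - x) > \<rho>" using \<rho>R \<rho>0 by linarith
  have "((\<lambda>z. z) has_derivative (\<lambda>h. h)) (at y)" by (rule has_derivative_ident)
  then have "(\<Phi> has_derivative (\<lambda>h. h)) (at y)"
  proof (rule has_derivative_transform_within_open[where s="{z. norm (z - x) > \<rho>}"])
    show "open {z. norm (z - x) > \<rho>}" by (intro open_Collect_less continuous_intros)
    show "y \<in> {z. norm (z - x) > \<rho>}" using yo by simp
    show "\<And>z. z \<in> {z. norm (z - x) > \<rho>} \<Longrightarrow> z = \<Phi> z" using outside(2) by (simp add: less_imp_le)
  qed
  then show ?thesis using outside(3)[of y] yo by simp
qed

end

context bcon begin

lemma y_cb: "norm (y - x) < \<rho> \<Longrightarrow> y \<in> cball x (r/2)"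
  using \<rho>R \<rho>0 r by (simp add: dist_norm norm_minus_commute)

lemma wy: "norm (w y - y) = q y * norm v" using q01[of y] by (simp add: w_def abs_of_nonneg)

lemma w_cb: assumes "norm (y - x) < \<rho>" shows "w y \<in> cball x (r/2)"
proof -
  have "norm (w y - x) \<le> norm (y - x) + norm (w y - y)" by (metis norm_triangle_sub add.commute diff_add_cancel
        norm_triangle_ineq add_diff_cancel_left' diff_diff_add)
  also have "\<dots> \<le> norm (y - x) + norm v" using wy[of y] q01[of y] by (simp add: mult_left_le_one_le)
  finally show ?thesis using assms v1 \<rho>R \<rho>0 by (simp add: dist_norm norm_minus_commute)
qed

lemma Dq_bd: "\<bar>Dq y h\<bar> \<le> 4 / \<rho> * norm h" using dbump_bound[OF \<rho>0] by (simp add: Dq_def)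

lemma DDd_bd: assumes "norm (y - x) < \<rho>" shows "\<bar>DDd y h\<bar> \<le> c1 * norm v * norm h"
proof -
  have e: "DDd y h = (grad (w y) - grad y) \<bullet> h + Dq y h * (grad (w y) \<bullet> v) - Dq y h * A"
    by (simp add: DDd_def inner_add_right inner_diff_left)
  have t1: "\<bar>(grad (w y) - grad y) \<bullet> h\<bar> \<le> Lc * norm v * norm h"
  proof -
    have "\<bar>(grad (w y) - grad y) \<bullet> h\<bar> \<le> norm (grad (w y) - grad y) * norm h" by (rule Cauchy_Schwarz_ineq2)
    also have "\<dots> \<le> (Lc * norm (w y - y)) * norm h"
      using grad_lip[OF w_cb[OF assms] y_cb[OF assms]] by (intro mult_right_mono) auto
    also have "\<dots> \<le> (Lc * norm v) * norm h"
      using wy[of y] q01[of y] Lc1 by (intro mult_right_mono mult_left_mono) (auto simp: mult_left_le_one_le)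
    finally show ?thesis by simp
  qed
  have t2: "\<bar>Dq y h * (grad (w y) \<bullet> v)\<bar> \<le> (4 / \<rho> * norm h) * (G * norm v)"
  proof -
    have "\<bar>grad (w y) \<bullet> v\<bar> \<le> G * norm v"
      using Cauchy_Schwarz_ineq2[of "grad (w y)" v] grad_bd[OF w_cb[OF assms]]
      by (meson mult_right_mono norm_ge_zero order_trans)
    then show ?thesis unfolding abs_mult using Dq_bd \<rho>0 by (intro mult_mono) auto
  qed
  have t3: "\<bar>Dq y h * A\<bar> \<le> (4 / \<rho> * norm h) * (G * norm v)"
    unfolding abs_mult using Dq_bd A_bd \<rho>0 by (intro mult_mono) auto
  have "\<bar>DDd y h\<bar> \<le> Lc * norm v * norm h + (4 / \<rho> * norm h) * (G * norm v) + (4 / \<rho> * norm h) * (G * norm v)"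
    unfolding e using t1 t2 t3 by linarith
  also have "\<dots> = c1 * norm v * norm h" by (simp add: c1_def algebra_simps)
  finally show ?thesis .
qed

lemma inner_sq: "(y - x) \<bullet> (y - x) = (norm (y - x))\<^sup>2" by (simp add: power2_norm_eq_inner)

lemma Dmu_bd: assumes "norm (y - x) < \<rho>" shows "\<bar>D\<mu> y h\<bar> \<le> (2 * c1 / N2 + 6 * K * \<rho>) * norm v * norm h"
proof -
  have k: "\<kappa> > 0" "\<kappa> \<ge> N2/2" using \<kappa>0 \<kappa>_ge by auto
  have t1: "\<bar>DDd y h / \<kappa>\<bar> \<le> 2 * c1 / N2 * norm v * norm h"
  proof -
    have "\<bar>DDd y h / \<kappa>\<bar> = \<bar>DDd y h\<bar> / \<kappa>" using k by simp
    also have "\<dots> \<le> (c1 * norm v * norm h) / (N2/2)"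
      using DDd_bd[OF assms] k N20 c1_0 by (intro frac_le) auto
    also have "\<dots> = 2 * c1 / N2 * norm v * norm h" by simp
    finally show ?thesis .
  qed
  have d: "norm (y - x) \<le> \<rho>" using assms by simp
  have sq: "\<bar>(y - x) \<bullet> (y - x)\<bar> \<le> \<rho> * \<rho>" unfolding inner_sq power2_eq_square abs_mult abs_norm_cancel
    by (rule mult_mono[OF d d]) (use \<rho>0 in auto)
  have t2: "\<bar>Dq y h * ((y - x) \<bullet> (y - x))\<bar> \<le> (4 / \<rho> * norm h) * (\<rho> * \<rho>)"
    unfolding abs_mult using Dq_bd sq \<rho>0 by (intro mult_mono) auto
  have t3: "\<bar>q y * (2 * ((y - x) \<bullet> h))\<bar> \<le> 1 * (2 * (\<rho> * norm h))"
  proof -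
    have "\<bar>(y - x) \<bullet> h\<bar> \<le> \<rho> * norm h"
      using Cauchy_Schwarz_ineq2[of "y - x" h] d by (meson mult_right_mono norm_ge_zero order_trans)
    then show ?thesis unfolding abs_mult using q01[of y] by (intro mult_mono) auto
  qed
  have t23: "\<bar>K * norm v * (Dq y h * ((y - x) \<bullet> (y - x)) + q y * (2 * ((y - x) \<bullet> h)))\<bar>
      \<le> K * norm v * (6 * \<rho> * norm h)"
  proof -
    have "\<bar>Dq y h * ((y - x) \<bullet> (y - x)) + q y * (2 * ((y - x) \<bullet> h))\<bar> \<le> 6 * \<rho> * norm h"
    proof -
      have "(4 / \<rho> * norm h) * (\<rho> * \<rho>) = 4 * \<rho> * norm h" using \<rho>0 by (simp add: field_simps)
      then show ?thesis using t2 t3 by linarith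
    qed
    then show ?thesis unfolding abs_mult using K0 by (simp add: mult_left_mono)
  qed
  have "\<bar>D\<mu> y h\<bar> \<le> 2 * c1 / N2 * norm v * norm h + K * norm v * (6 * \<rho> * norm h)"
    unfolding D\<mu>_def using t1 t23 by linarith
  also have "\<dots> = (2 * c1 / N2 + 6 * K * \<rho>) * norm v * norm h" by (simp add: algebra_simps)
  finally show ?thesis .
qed

definition "Cd = 4 / \<rho> + nn * (2 * c1 / N2 + 6 * K * \<rho>)"
lemma Cd0: "Cd \<ge> 0" using \<rho>0 nn0 c1_0 N20 K0 by (simp add: Cd_def)

lemma DPhi_bd: "norm (D\<Phi> y h - h) \<le> Cd * norm v * norm h"
proof (cases "norm (y - x) < \<rho>")
  case True
  have "norm (D\<Phi> y h - h) = norm (Dq y h *\<^sub>R v - D\<mu> y h *\<^sub>R n)" by (simp add: D\<Phi>_def)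
  also have "\<dots> \<le> \<bar>Dq y h\<bar> * norm v + \<bar>D\<mu> y h\<bar> * nn"
    using norm_triangle_ineq4[of "Dq y h *\<^sub>R v" "D\<mu> y h *\<^sub>R n"] by (simp add: n_def nn_def)
  also have "\<dots> \<le> (4 / \<rho> * norm h) * norm v + ((2 * c1 / N2 + 6 * K * \<rho>) * norm v * norm h) * nn"
    using Dq_bd Dmu_bd[OF True] nn0 by (intro add_mono mult_right_mono) auto
  also have "\<dots> = Cd * norm v * norm h" by (simp add: Cd_def algebra_simps)
  finally show ?thesis .
next
  case False
  then show ?thesis using outside(3)[of y] Cd0 by simp
qed

lemma DDf_x: "DDf x = 0" by (simp add: DDf_def w_def q_def bump_at A_def)

lemma DDf_bd1: assumes "norm (y - x) < \<rho>" shows "\<bar>DDf y\<bar> \<le> c1 * norm v * norm (y - x)"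
proof -
  have "norm (DDf y - DDf x) \<le> (c1 * norm v) * norm (y - x)"
  proof (rule differentiable_bound[of "ball x \<rho>" DDf DDd])
    show "\<And>z. z \<in> ball x \<rho> \<Longrightarrow> (DDf has_derivative DDd z) (at z within ball x \<rho>)"
    proof -
      fix z assume z: "z \<in> ball x \<rho>"
      then have "norm (z - x) < r/2" using \<rho>R r by (simp add: dist_norm norm_minus_commute)
      then show "(DDf has_derivative DDd z) (at z within ball x \<rho>)" using dDD_lem has_derivative_at_withinI by blast
    qed
    show "\<And>z. z \<in> ball x \<rho> \<Longrightarrow> onorm (DDd z) \<le> c1 * norm v"
      by (rule onorm_le) (use DDd_bd in \<open>auto simp: dist_norm norm_minus_commute\<close>)
  qed (use assms \<rho>0 in \<open>auto simp: dist_norm norm_minus_commute\<close>)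
  then show ?thesis by (simp add: DDf_x)
qed

lemma DDf_bd2: assumes "norm (y - x) < \<rho>" shows "\<bar>DDf y\<bar> \<le> 2 * G * q y * norm v"
proof -
  have "\<bar>\<phi> (w y) - \<phi> y\<bar> \<le> G * norm (w y - y)" using phi_lip[OF w_cb[OF assms] y_cb[OF assms]] .
  also have "\<dots> = G * q y * norm v" using wy by simp
  finally have a: "\<bar>\<phi> (w y) - \<phi> y\<bar> \<le> G * q y * norm v" .
  have b: "\<bar>q y * A\<bar> \<le> q y * (G * norm v)" using A_bd q01[of y] by (simp add: abs_mult mult_left_mono)
  have "\<bar>DDf y\<bar> \<le> \<bar>\<phi> (w y) - \<phi> y\<bar> + \<bar>q y * A\<bar>"
    unfolding DDf_def using abs_triangle_ineq4[of "\<phi> (w y) - \<phi> y" "q y * A"] by simp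
  then show ?thesis using a b by (simp add: algebra_simps)
qed

definition "Cp = 1 + nn * (4 * G / N2 + K * \<rho>\<^sup>2)"

lemma mu_bd: assumes "norm (y - x) < \<rho>" shows "\<bar>\<mu> y\<bar> \<le> (4 * G / N2 + K * \<rho>\<^sup>2) * norm v"
proof -
  have k: "\<kappa> > 0" "\<kappa> \<ge> N2/2" using \<kappa>0 \<kappa>_ge by auto
  have "\<bar>DDf y / \<kappa>\<bar> = \<bar>DDf y\<bar> / \<kappa>" using k by simp
  also have "\<dots> \<le> (2 * G * norm v) / (N2/2)"
  proof (rule frac_le)
    show "\<bar>DDf y\<bar> \<le> 2 * G * norm v"
      using DDf_bd2[OF assms] q01[of y] G0 by (smt (verit) mult_left_le_one_le mult_nonneg_nonneg norm_ge_zero mult.commute mult.left_commute)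
  qed (use k N20 G0 in auto)
  also have "\<dots> = 4 * G / N2 * norm v" by simp
  finally have t1: "\<bar>DDf y / \<kappa>\<bar> \<le> 4 * G / N2 * norm v" .
  have t2: "\<bar>K * norm v * q y * ((y - x) \<bullet> (y - x))\<bar> \<le> K * norm v * 1 * \<rho>\<^sup>2"
  proof -
    have "\<bar>(y - x) \<bullet> (y - x)\<bar> \<le> \<rho>\<^sup>2" unfolding inner_sq using assms by (simp add: power_mono)
    then show ?thesis unfolding abs_mult using q01[of y] K0 by (intro mult_mono) auto
  qed
  have "\<bar>\<mu> y\<bar> \<le> \<bar>DDf y / \<kappa>\<bar> + \<bar>K * norm v * q y * ((y - x) \<bullet> (y - x))\<bar>"
    unfolding \<mu>_def by (rule abs_triangle_ineq)
  then show ?thesis using t1 t2 by (simp add: algebra_simps)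
qed

lemma Cp0: "Cp \<ge> 0" using nn0 G0 N20 K0 by (simp add: Cp_def)

lemma Phi_move: "norm (\<Phi> y - y) \<le> Cp * norm v"
proof (cases "norm (y - x) < \<rho>")
  case True
  have "norm (\<Phi> y - y) = norm (q y *\<^sub>R v - \<mu> y *\<^sub>R n)" by (simp add: \<Phi>_def w_def)
  also have "\<dots> \<le> \<bar>q y\<bar> * norm v + \<bar>\<mu> y\<bar> * nn"
    using norm_triangle_ineq4[of "q y *\<^sub>R v" "\<mu> y *\<^sub>R n"] by (simp add: n_def nn_def)
  also have "\<dots> \<le> 1 * norm v + ((4 * G / N2 + K * \<rho>\<^sup>2) * norm v) * nn"
    using q01[of y] mu_bd[OF True] nn0 by (intro add_mono mult_right_mono) auto
  also have "\<dots> = Cp * norm v" by (simp add: Cp_def algebra_simps)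
  finally show ?thesis .
next
  case False
  then show ?thesis using outside(2)[of y] Cp0 by simp
qed

end

context bcon begin

lemma X_ineq: assumes "0 \<le> d" "d \<le> \<rho>" "0 \<le> m2"
  shows "3 * Lc * nn * m2 * d \<le> m2 * \<kappa> / 2"
proof -
  have "3 * Lc * nn * d \<le> 3 * Lc * nn * \<rho>" using assms Lc1 nn0 by (intro mult_left_mono) auto
  also have "\<dots> \<le> \<kappa> / 2" using \<rho>n \<kappa>_ge by linarith
  finally have "3 * Lc * nn * d \<le> \<kappa> / 2" .
  then have "(3 * Lc * nn * d) * m2 \<le> (\<kappa> / 2) * m2" using assms by (intro mult_right_mono) auto
  then show ?thesis by (simp add: algebra_simps)
qed

lemma kappa_sq: "(N2/2)\<^sup>2 \<le> \<kappa>\<^sup>2" using \<kappa>_ge N20 by (intro power_mono) auto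

lemma Y1: assumes "0 \<le> d" "1/4 \<le> qq" "\<bar>a\<bar> \<le> c1 * norm v * d"
  shows "3 * Lc * nn * \<bar>a / \<kappa>\<bar> * d \<le> K * norm v * qq * d\<^sup>2 * \<kappa> / 2"
proof -
  have k: "\<kappa> > 0" using \<kappa>0 .
  define Z where "Z = norm v * d\<^sup>2"
  have Z0: "Z \<ge> 0" using assms by (simp add: Z_def)
  have c: "24 * Lc * nn * c1 \<le> K * \<kappa>\<^sup>2"
  proof -
    have "24 * Lc * nn * c1 \<le> (N2/2)\<^sup>2 * K" using K1 by (simp add: c1_def)
    also have "\<dots> \<le> \<kappa>\<^sup>2 * K" using kappa_sq K0 by (intro mult_right_mono) auto
    finally show ?thesis by (simp add: mult.commute)
  qed
  have "3 * Lc * nn * \<bar>a / \<kappa>\<bar> * d = (3 * Lc * nn / \<kappa>) * (\<bar>a\<bar> * d)" using k by (simp add: abs_divide)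
  also have "\<dots> \<le> (3 * Lc * nn / \<kappa>) * ((c1 * norm v * d) * d)"
    using assms Lc1 nn0 k by (intro mult_left_mono mult_right_mono) auto
  also have "\<dots> = (3 * Lc * nn * c1 / \<kappa>) * Z" by (simp add: Z_def power2_eq_square)
  also have "\<dots> \<le> (K * \<kappa> / 8) * Z"
  proof (rule mult_right_mono[OF _ Z0])
    show "3 * Lc * nn * c1 / \<kappa> \<le> K * \<kappa> / 8"
      using c k by (simp add: divide_simps power2_eq_square)
  qed
  also have "\<dots> \<le> K * norm v * qq * d\<^sup>2 * \<kappa> / 2"
  proof -
    have "(K * \<kappa> / 8) * Z = (K * \<kappa> * Z / 2) * (1/4)" by simp
    also have "\<dots> \<le> (K * \<kappa> * Z / 2) * qq" using assms K0 k Z0 by (intro mult_left_mono) auto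
    finally show ?thesis by (simp add: Z_def algebra_simps)
  qed
  finally show ?thesis .
qed

lemma Y2: assumes "\<rho>/2 < d" "0 \<le> qq" "\<bar>a\<bar> \<le> 2 * G * qq * norm v"
  shows "3 * Lc * nn * \<bar>a / \<kappa>\<bar> * d \<le> K * norm v * qq * d\<^sup>2 * \<kappa> / 2"
proof -
  have k: "\<kappa> > 0" using \<kappa>0 .
  define Z where "Z = qq * norm v * d"
  have d0: "d > 0" using assms \<rho>0 by linarith
  have Z0: "Z \<ge> 0" using assms d0 by (simp add: Z_def)
  have c: "24 * Lc * nn * G \<le> K * \<kappa>\<^sup>2 * \<rho>"
  proof -
    have "24 * Lc * nn * G / \<rho> \<le> \<kappa>\<^sup>2 * K"
      using K2 kappa_sq K0 by (meson mult_right_mono order_trans)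
    then show ?thesis using \<rho>0 by (simp add: divide_simps mult.commute mult.left_commute)
  qed
  have "3 * Lc * nn * \<bar>a / \<kappa>\<bar> * d = (3 * Lc * nn / \<kappa>) * (\<bar>a\<bar> * d)" using k by (simp add: abs_divide)
  also have "\<dots> \<le> (3 * Lc * nn / \<kappa>) * ((2 * G * qq * norm v) * d)"
    using assms Lc1 nn0 k d0 by (intro mult_left_mono mult_right_mono) auto
  also have "\<dots> = (6 * Lc * nn * G / \<kappa>) * Z" by (simp add: Z_def)
  also have "\<dots> \<le> (K * \<kappa> * \<rho> / 4) * Z"
  proof (rule mult_right_mono[OF _ Z0])
    show "6 * Lc * nn * G / \<kappa> \<le> K * \<kappa> * \<rho> / 4"
      using c k by (simp add: divide_simps power2_eq_square) (simp add: algebra_simps)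
  qed
  also have "\<dots> \<le> (K * \<kappa> * d / 2) * Z"
  proof (rule mult_right_mono[OF _ Z0])
    have "(K * \<kappa>) * (\<rho> / 4) \<le> (K * \<kappa>) * (d / 2)" by (rule mult_left_mono) (use assms K0 k in auto)
    then show "K * \<kappa> * \<rho> / 4 \<le> K * \<kappa> * d / 2" by simp
  qed
  also have "\<dots> = K * norm v * qq * d\<^sup>2 * \<kappa> / 2" by (simp add: Z_def power2_eq_square)
  finally show ?thesis .
qed

end

context bcon begin

lemma clos_pres: assumes yc: "y \<in> closure \<Omega>" shows "\<Phi> y \<in> closure \<Omega>"
proof (cases "norm (y - x) < \<rho>")
  case False
  then show ?thesis using outside(2)[of y] yc by simp
next
  case True
  define d where "d = norm (y - x)"
  define qq where "qq = q y"
  define a where "a = DDf y"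
  define m2 where "m2 = K * norm v * qq * d\<^sup>2"
  have d0: "0 \<le> d" and d\<rho>: "d < \<rho>" using True by (auto simp: d_def)
  have yb: "y \<in> ball x r" using y_cb[OF True] cb_sub by blast
  have phiy: "\<phi> y \<le> 0" by (rule clos_le[OF yc yb])
  have a1: "\<bar>a\<bar> \<le> c1 * norm v * d" using DDf_bd1[OF True] by (simp add: a_def d_def)
  have a2: "\<bar>a\<bar> \<le> 2 * G * qq * norm v" using DDf_bd2[OF True] by (simp add: a_def qq_def)
  have k: "\<kappa> > 0" "\<kappa> \<ge> N2/2" using \<kappa>0 \<kappa>_ge by auto
  have qq01: "0 \<le> qq" "qq \<le> 1" using q01 by (auto simp: qq_def)
  have mu_eq: "\<mu> y = a / \<kappa> + m2" by (simp add: \<mu>_def a_def m2_def qq_def d_def inner_sq)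
  have m20: "m2 \<ge> 0" using K0 qq01 by (simp add: m2_def)
  have m1_bd: "\<bar>a / \<kappa>\<bar> \<le> (2 * c1 / N2) * norm v * d"
  proof -
    have "\<bar>a / \<kappa>\<bar> = \<bar>a\<bar> / \<kappa>" using k by simp
    also have "\<dots> \<le> (c1 * norm v * d) / (N2/2)" using a1 k N20 c1_0 d0 by (intro frac_le) auto
    also have "\<dots> = (2 * c1 / N2) * norm v * d" by (simp add: field_simps)
    finally show ?thesis .
  qed
  have m2_bd: "m2 \<le> K * norm v * \<rho> * d"
  proof -
    have "m2 = (K * norm v) * (qq * d * d)" by (simp add: m2_def power2_eq_square)
    also have "\<dots> \<le> (K * norm v) * (1 * \<rho> * d)"
      using qq01 d0 d\<rho> K0 by (intro mult_left_mono mult_right_mono mult_mono) auto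
    finally show ?thesis by simp
  qed
  have mu_bd: "\<bar>\<mu> y\<bar> \<le> \<bar>a / \<kappa>\<bar> + m2" unfolding mu_eq
    using abs_triangle_ineq[of "a / \<kappa>" m2] m20 by (simp only: abs_of_nonneg)
  have F6: "\<bar>\<mu> y\<bar> * nn \<le> d"
  proof -
    have "\<bar>\<mu> y\<bar> \<le> ((2 * c1 / N2) + K * \<rho>) * norm v * d" using mu_bd m1_bd m2_bd by (simp add: algebra_simps)
    then have "\<bar>\<mu> y\<bar> * nn \<le> (((2 * c1 / N2) + K * \<rho>) * norm v * d) * nn" using nn0 by (intro mult_right_mono) auto
    also have "\<dots> = (((2 * c1 / N2) + K * \<rho>) * nn * norm v) * d" by (simp add: algebra_simps)
    also have "\<dots> \<le> 1 * d" using v3 d0 by (intro mult_right_mono) (auto simp: c1_def)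
    finally show ?thesis by simp
  qed
  have F7: "norm (w y - (x + v)) \<le> 2 * d"
  proof -
    have e: "w y - (x + v) = (y - x) - (1 - qq) *\<^sub>R v" by (simp add: w_def qq_def algebra_simps)
    have "(1 - qq) * norm v \<le> (2 / \<rho> * d) * (\<rho> / 4)"
      using bump_one_minus[OF \<rho>0, of x y] v1 qq01 by (intro mult_mono) (auto simp: qq_def q_def d_def)
    also have "\<dots> = d / 2" using \<rho>0 by simp
    finally have "(1 - qq) * norm v \<le> d / 2" .
    then have "norm ((1 - qq) *\<^sub>R v) \<le> d / 2" using qq01 by simp
    then show ?thesis unfolding e using norm_triangle_ineq4[of "y - x" "(1 - qq) *\<^sub>R v"] d0 d_def by linarith
  qed
  have Pw: "\<Phi> y - w y = - (\<mu> y *\<^sub>R n)" by (simp add: \<Phi>_def)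
  have nPw: "norm (\<Phi> y - w y) = \<bar>\<mu> y\<bar> * nn" by (simp add: Pw n_def nn_def)
  have seg: "norm (w y + t *\<^sub>R (\<Phi> y - w y) - (x + v)) \<le> 3 * d" if t: "t \<in> {0..1}" for t
  proof -
    have e: "w y + t *\<^sub>R (\<Phi> y - w y) - (x + v) = (w y - (x + v)) + t *\<^sub>R (\<Phi> y - w y)" by simp
    have "norm (w y + t *\<^sub>R (\<Phi> y - w y) - (x + v)) \<le> norm (w y - (x + v)) + norm (t *\<^sub>R (\<Phi> y - w y))"
      unfolding e by (rule norm_triangle_ineq)
    also have "norm (t *\<^sub>R (\<Phi> y - w y)) \<le> \<bar>\<mu> y\<bar> * nn" using t nPw nn0
      by (simp add: abs_of_nonneg mult_left_le_one_le)
    finally show ?thesis using F7 F6 by linarith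
  qed
  have seg_cb: "w y + t *\<^sub>R (\<Phi> y - w y) \<in> cball x (r/2)" if t: "t \<in> {0..1}" for t
  proof -
    have e: "w y + t *\<^sub>R (\<Phi> y - w y) - x = (w y + t *\<^sub>R (\<Phi> y - w y) - (x + v)) + v" by simp
    have "norm (w y + t *\<^sub>R (\<Phi> y - w y) - x) \<le> norm (w y + t *\<^sub>R (\<Phi> y - w y) - (x + v)) + norm v"
      unfolding e by (rule norm_triangle_ineq)
    also have "\<dots> \<le> 3 * d + \<rho> / 4" using seg[OF t] v1 by linarith
    finally have "norm (w y + t *\<^sub>R (\<Phi> y - w y) - x) \<le> r/2" using d\<rho> \<rho>R \<rho>0 by linarith
    then show ?thesis by (simp add: dist_norm norm_minus_commute)
  qed
  have lin: "\<bar>\<phi> (\<Phi> y) - \<phi> (w y) - grad (x + v) \<bullet> (\<Phi> y - w y)\<bar> \<le> norm (\<Phi> y - w y) * (Lc * (3 * d))"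
    by (rule lin_est[OF seg_cb xv_cb seg])
  have gi: "grad (x + v) \<bullet> (\<Phi> y - w y) = - (\<mu> y * \<kappa>)" by (simp add: Pw \<kappa>_def)
  have phw: "\<phi> (w y) = \<phi> y + qq * A + a" by (simp add: a_def DDf_def qq_def)
  have s0: "\<phi> (\<Phi> y) - \<phi> (w y) - grad (x + v) \<bullet> (\<Phi> y - w y) \<le> norm (\<Phi> y - w y) * (Lc * (3 * d))"
    using abs_le_D1[OF lin] .
  have s1: "norm (\<Phi> y - w y) * (Lc * (3 * d)) = 3 * Lc * nn * \<bar>\<mu> y\<bar> * d" unfolding nPw by simp
  have step1: "\<phi> (\<Phi> y) \<le> \<phi> y + qq * A + a - \<mu> y * \<kappa> + 3 * Lc * nn * \<bar>\<mu> y\<bar> * d"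
    using s0 unfolding s1 gi phw by linarith
  have ak: "a - \<mu> y * \<kappa> = - (m2 * \<kappa>)" using k by (simp add: mu_eq algebra_simps)
  have X: "3 * Lc * nn * m2 * d \<le> m2 * \<kappa> / 2" by (rule X_ineq) (use d0 d\<rho> m20 in auto)
  have Y: "3 * Lc * nn * \<bar>a / \<kappa>\<bar> * d \<le> K * norm v * qq * d\<^sup>2 * \<kappa> / 2"
  proof (cases "qq \<ge> 1/4")
    case True then show ?thesis by (rule Y1[OF d0 _ a1])
  next
    case False
    then have "\<rho>/2 < d" using bump_small[OF \<rho>0, of x y] by (simp add: qq_def q_def d_def)
    then show ?thesis by (rule Y2[OF _ qq01(1) a2])
  qed
  have XY: "3 * Lc * nn * \<bar>\<mu> y\<bar> * d \<le> m2 * \<kappa>"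
  proof -
    have "3 * Lc * nn * \<bar>\<mu> y\<bar> * d \<le> 3 * Lc * nn * (\<bar>a / \<kappa>\<bar> + m2) * d"
      using mu_bd Lc1 nn0 d0 by (intro mult_right_mono mult_left_mono) auto
    also have "\<dots> = 3 * Lc * nn * \<bar>a / \<kappa>\<bar> * d + 3 * Lc * nn * m2 * d" by (simp add: algebra_simps)
    also have "\<dots> \<le> m2 * \<kappa>" using X Y by (simp add: m2_def)
    finally show ?thesis .
  qed
  have qA: "qq * A \<le> 0" using qq01 A_le by (simp add: mult_nonneg_nonpos)
  have "\<phi> (\<Phi> y) \<le> 0" using step1 ak XY qA phiy by linarith
  moreover have "\<Phi> y \<in> ball x r"
  proof -
    have e: "\<Phi> y - x = ((w y - (x + v)) + (\<Phi> y - w y)) + v" by simp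
    have "norm (\<Phi> y - x) \<le> norm ((w y - (x + v)) + (\<Phi> y - w y)) + norm v"
      unfolding e by (rule norm_triangle_ineq)
    also have "\<dots> \<le> norm (w y - (x + v)) + norm (\<Phi> y - w y) + norm v"
      using norm_triangle_ineq[of "w y - (x + v)" "\<Phi> y - w y"] by linarith
    also have "\<dots> \<le> 2 * d + d + \<rho>/4" using F7 F6 nPw v1 by linarith
    finally have "norm (\<Phi> y - x) < r" using d\<rho> \<rho>R \<rho>0 by linarith
    then show ?thesis by (simp add: dist_norm norm_minus_commute)
  qed
  ultimately show ?thesis using le_clos by blast
qed

end

context bsetup2 begin

lemma key_b: "\<exists>\<epsilon>>0. \<exists>C\<ge>0. \<forall>v. norm v < \<epsilon> \<and> x + v \<in> closure \<Omega> \<longrightarrow>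
    (\<exists>\<Phi> D. \<Phi> x = x + v \<and> (\<forall>y\<in>closure \<Omega>. \<Phi> y \<in> closure \<Omega>) \<and>
        (\<forall>y. (\<Phi> has_derivative D y) (at y)) \<and>
        (\<forall>y h. norm (D y h - h) \<le> C * norm v * norm h) \<and>
        (\<forall>y. norm (\<Phi> y - y) \<le> C * norm v))"
proof -
  have nn0: "nn > 0" and N20: "N2 > 0" and Lc1: "Lc \<ge> 1" and G0: "G \<ge> 0" and r: "r > 0"
    using nn0 N20 Lc1 G0 r by auto
  define \<rho> where "\<rho> = min (r/8) (N2 / (12 * Lc * nn))"
  have \<rho>0: "\<rho> > 0" using r N20 nn0 Lc1 by (simp add: \<rho>_def)
  have \<rho>R: "\<rho> \<le> r/8" by (simp add: \<rho>_def)
  have \<rho>n: "3 * Lc * nn * \<rho> \<le> N2 / 4"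
  proof -
    have "3 * Lc * nn * \<rho> \<le> 3 * Lc * nn * (N2 / (12 * Lc * nn))"
      using Lc1 nn0 by (intro mult_left_mono) (auto simp: \<rho>_def)
    also have "\<dots> = N2 / 4" using Lc1 nn0 by (simp add: field_simps)
    finally show ?thesis .
  qed
  define c1 where "c1 = Lc + 8 * G / \<rho>"
  have c10: "c1 \<ge> 0" using Lc1 G0 \<rho>0 by (simp add: c1_def)
  define K where "K = 4 * (24 * Lc * nn * c1 + 24 * Lc * nn * G / \<rho>) / N2\<^sup>2"
  have t1: "24 * Lc * nn * c1 \<ge> 0" "24 * Lc * nn * G / \<rho> \<ge> 0" using Lc1 nn0 c10 G0 \<rho>0 by auto
  have K0: "K \<ge> 0" using t1 by (simp add: K_def)
  have KK: "(N2/2)\<^sup>2 * K = 24 * Lc * nn * c1 + 24 * Lc * nn * G / \<rho>"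
    using N20 by (simp add: K_def power2_eq_square field_simps)
  have K1: "24 * Lc * nn * (Lc + 8 * G / \<rho>) \<le> (N2/2)\<^sup>2 * K" using KK t1 by (simp add: c1_def)
  have K2: "24 * Lc * nn * G / \<rho> \<le> (N2/2)\<^sup>2 * K" using KK t1 by simp
  define X where "X = (2 * (Lc + 8 * G / \<rho>) / N2 + K * \<rho>) * nn"
  have X0: "X \<ge> 0" using c10 N20 K0 \<rho>0 nn0 by (simp add: X_def c1_def)
  define \<epsilon> where "\<epsilon> = min (\<rho>/4) (min (N2 / (2 * Lc * nn)) (1 / (X + 1)))"
  have \<epsilon>0: "\<epsilon> > 0" using \<rho>0 N20 Lc1 nn0 X0 by (simp add: \<epsilon>_def)
  define Cd where "Cd = 4 / \<rho> + nn * (2 * c1 / N2 + 6 * K * \<rho>)"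
  define Cp where "Cp = 1 + nn * (4 * G / N2 + K * \<rho>\<^sup>2)"
  define C where "C = max Cd Cp"
  have Cp0: "Cp \<ge> 0" using nn0 G0 N20 K0 by (simp add: Cp_def)
  have C0: "C \<ge> 0" using Cp0 by (simp add: C_def)
  have main: "\<forall>v. norm v < \<epsilon> \<and> x + v \<in> closure \<Omega> \<longrightarrow>
    (\<exists>\<Phi> D. \<Phi> x = x + v \<and> (\<forall>y\<in>closure \<Omega>. \<Phi> y \<in> closure \<Omega>) \<and>
        (\<forall>y. (\<Phi> has_derivative D y) (at y)) \<and>
        (\<forall>y h. norm (D y h - h) \<le> C * norm v * norm h) \<and>
        (\<forall>y. norm (\<Phi> y - y) \<le> C * norm v))"
  proof (intro allI impI)
    fix v assume hv: "norm v < \<epsilon> \<and> x + v \<in> closure \<Omega>"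
    have v1: "norm v \<le> \<rho>/4" using hv by (simp add: \<epsilon>_def)
    have v2: "Lc * norm v * nn \<le> N2/2"
    proof -
      have "norm v \<le> N2 / (2 * Lc * nn)" using hv by (simp add: \<epsilon>_def)
      then have "Lc * nn * norm v \<le> Lc * nn * (N2 / (2 * Lc * nn))" using Lc1 nn0 by (intro mult_left_mono) auto
      also have "\<dots> = N2/2" using Lc1 nn0 by (simp add: field_simps)
      finally show ?thesis by (simp add: mult.commute mult.left_commute)
    qed
    have v3: "(2 * (Lc + 8 * G / \<rho>) / N2 + K * \<rho>) * nn * norm v \<le> 1"
    proof -
      have "norm v \<le> 1 / (X + 1)" using hv by (simp add: \<epsilon>_def)
      then have "X * norm v \<le> X * (1 / (X + 1))" using X0 by (intro mult_left_mono) auto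
      also have "\<dots> \<le> 1" using X0 by (simp add: field_simps)
      finally show ?thesis by (simp add: X_def)
    qed
    have bc: "bcon \<Omega> x r \<phi> grad H M \<rho> K v"
      by (intro bcon.intro bcon_axioms.intro bsetup2_axioms) (use \<rho>0 \<rho>R \<rho>n K0 K1 K2 v1 v2 v3 hv in auto)
    interpret B: bcon \<Omega> x r \<phi> grad H M \<rho> K v by (rule bc)
    have CdE: "B.Cd = Cd" by (simp add: B.Cd_def Cd_def B.c1_def c1_def)
    have CpE: "B.Cp = Cp" by (simp add: B.Cp_def Cp_def)
    show "\<exists>\<Phi> D. \<Phi> x = x + v \<and> (\<forall>y\<in>closure \<Omega>. \<Phi> y \<in> closure \<Omega>) \<and>
        (\<forall>y. (\<Phi> has_derivative D y) (at y)) \<and>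
        (\<forall>y h. norm (D y h - h) \<le> C * norm v * norm h) \<and>
        (\<forall>y. norm (\<Phi> y - y) \<le> C * norm v)"
    proof (intro exI[of _ B.\<Phi>] exI[of _ B.D\<Phi>] conjI ballI allI)
      show "B.\<Phi> x = x + v" by (rule B.at_x)
      show "B.\<Phi> y \<in> closure \<Omega>" if "y \<in> closure \<Omega>" for y using B.clos_pres that .
      show "(B.\<Phi> has_derivative B.D\<Phi> y) (at y)" for y by (rule B.deriv_all)
      show "norm (B.D\<Phi> y h - h) \<le> C * norm v * norm h" for y h
      proof -
        have "norm (B.D\<Phi> y h - h) \<le> Cd * norm v * norm h" using B.DPhi_bd CdE by simp
        also have "\<dots> \<le> C * norm v * norm h" by (intro mult_right_mono) (auto simp: C_def)
        finally show ?thesis .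
      qed
      show "norm (B.\<Phi> y - y) \<le> C * norm v" for y
      proof -
        have "norm (B.\<Phi> y - y) \<le> Cp * norm v" using B.Phi_move CpE by simp
        also have "\<dots> \<le> C * norm v" by (intro mult_right_mono) (auto simp: C_def)
        finally show ?thesis .
      qed
    qed
  qed
  show ?thesis using \<epsilon>0 C0 main by blast
qed

end

lemma key_interior:
  fixes \<Omega> :: "'a::euclidean_space set"
  assumes "open \<Omega>" "x \<in> \<Omega>"
  shows "\<exists>\<epsilon>>0. \<exists>C\<ge>0. \<forall>v. norm v < \<epsilon> \<and> x + v \<in> closure \<Omega> \<longrightarrow>
    (\<exists>\<Phi> D. \<Phi> x = x + v \<and> (\<forall>y\<in>closure \<Omega>. \<Phi> y \<in> closure \<Omega>) \<and>
        (\<forall>y. (\<Phi> has_derivative D y) (at y)) \<and>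
        (\<forall>y h. norm (D y h - h) \<le> C * norm v * norm h) \<and>
        (\<forall>y. norm (\<Phi> y - y) \<le> C * norm v))"
proof -
  obtain e where e: "e > 0" "ball x e \<subseteq> \<Omega>" using assms open_contains_ball by blast
  define \<rho> where "\<rho> = e / 2"
  have \<rho>0: "\<rho> > 0" using e by (simp add: \<rho>_def)
  define C where "C = 4 / \<rho> + 1"
  have C0: "C \<ge> 0" using \<rho>0 by (simp add: C_def)
  have main: "\<forall>v. norm v < \<rho> \<and> x + v \<in> closure \<Omega> \<longrightarrow>
    (\<exists>\<Phi> D. \<Phi> x = x + v \<and> (\<forall>y\<in>closure \<Omega>. \<Phi> y \<in> closure \<Omega>) \<and>
        (\<forall>y. (\<Phi> has_derivative D y) (at y)) \<and>
        (\<forall>y h. norm (D y h - h) \<le> C * norm v * norm h) \<and>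
        (\<forall>y. norm (\<Phi> y - y) \<le> C * norm v))"
  proof (intro allI impI)
    fix v :: 'a assume hv: "norm v < \<rho> \<and> x + v \<in> closure \<Omega>"
    define \<Phi> where "\<Phi> y = y + bump x \<rho> y *\<^sub>R v" for y
    define D where "D y h = h + dbump x \<rho> y h *\<^sub>R v" for y h
    show "\<exists>\<Phi> D. \<Phi> x = x + v \<and> (\<forall>y\<in>closure \<Omega>. \<Phi> y \<in> closure \<Omega>) \<and>
        (\<forall>y. (\<Phi> has_derivative D y) (at y)) \<and>
        (\<forall>y h. norm (D y h - h) \<le> C * norm v * norm h) \<and>
        (\<forall>y. norm (\<Phi> y - y) \<le> C * norm v)"
    proof (intro exI[of _ \<Phi>] exI[of _ D] conjI ballI allI)
      show "\<Phi> x = x + v" by (simp add: \<Phi>_def bump_at)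
      show "\<Phi> y \<in> closure \<Omega>" if y: "y \<in> closure \<Omega>" for y
      proof (cases "norm (y - x) < \<rho>")
        case True
        have "norm (\<Phi> y - x) \<le> norm (y - x) + norm (bump x \<rho> y *\<^sub>R v)"
          unfolding \<Phi>_def by (metis add_diff_eq diff_add_eq norm_triangle_ineq add.commute)
        also have "norm (bump x \<rho> y *\<^sub>R v) \<le> norm v"
          using bump_nonneg[of x \<rho> y] bump_le1[of x \<rho> y] by (simp add: mult_left_le_one_le)
        finally have "norm (\<Phi> y - x) < e" using True hv by (simp add: \<rho>_def)
        then have "\<Phi> y \<in> \<Omega>" using e by (simp add: dist_norm norm_minus_commute subset_eq)
        then show ?thesis by (simp add: closure_def)
      next
        case False
        then show ?thesis using bump_zero[OF \<rho>0, of y x] y by (simp add: \<Phi>_def)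
      qed
      show "(\<Phi> has_derivative D y) (at y)" for y
        unfolding \<Phi>_def[abs_def] D_def[abs_def]
        using has_derivative_add[OF has_derivative_ident has_derivative_scaleR_left[OF bump_deriv[of x \<rho> y UNIV]]] .
      show "norm (D y h - h) \<le> C * norm v * norm h" for y h
      proof -
        have "norm (D y h - h) = \<bar>dbump x \<rho> y h\<bar> * norm v" by (simp add: D_def)
        also have "\<dots> \<le> (4 / \<rho> * norm h) * norm v" by (intro mult_right_mono dbump_bound[OF \<rho>0]) auto
        also have "\<dots> \<le> C * norm v * norm h" using \<rho>0 by (simp add: C_def algebra_simps mult_right_mono)
        finally show ?thesis .
      qed
      show "norm (\<Phi> y - y) \<le> C * norm v" for y
      proof -
        have "norm (\<Phi> y - y) \<le> norm v"
          using bump_nonneg[of x \<rho> y] bump_le1[of x \<rho> y] by (simp add: \<Phi>_def mult_left_le_one_le)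
        also have "\<dots> \<le> C * norm v" using \<rho>0 by (simp add: C_def algebra_simps)
        finally show ?thesis .
      qed
    qed
  qed
  show ?thesis using \<rho>0 C0 main by blast
qed

lemma key:
  fixes \<Omega> :: "'a::euclidean_space set"
  assumes "open \<Omega>" "bounded \<Omega>" "C2_boundary \<Omega>" "x \<in> closure \<Omega>"
  shows "\<exists>\<epsilon>>0. \<exists>C\<ge>0. \<forall>v. norm v < \<epsilon> \<and> x + v \<in> closure \<Omega> \<longrightarrow>
    (\<exists>\<Phi> D. \<Phi> x = x + v \<and> (\<forall>y\<in>closure \<Omega>. \<Phi> y \<in> closure \<Omega>) \<and>
        (\<forall>y. (\<Phi> has_derivative D y) (at y)) \<and>
        (\<forall>y h. norm (D y h - h) \<le> C * norm v * norm h) \<and>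
        (\<forall>y. norm (\<Phi> y - y) \<le> C * norm v))"
proof (cases "x \<in> \<Omega>")
  case True
  then show ?thesis using key_interior[OF assms(1) True] by blast
next
  case False
  have fr: "x \<in> frontier \<Omega>" using assms(4) False assms(1) by (simp add: frontier_def interior_open)
  obtain r \<phi> where r: "r > 0" and C2: "C2_on (ball x r) \<phi>"
    and nz: "\<forall>y\<in>ball x r. \<forall>D. (\<phi> has_derivative D) (at y) \<longrightarrow> D \<noteq> (\<lambda>h. 0)"
    and Oeq: "\<Omega> \<inter> ball x r = {y\<in>ball x r. \<phi> y < 0}"
    using assms(3) fr unfolding C2_boundary_def by blast
  obtain grad :: "'a \<Rightarrow> 'a" and H where
    dphi: "\<forall>y\<in>ball x r. (\<phi> has_derivative (\<lambda>h. grad y \<bullet> h)) (at y)"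
    and dgrad: "\<forall>y\<in>ball x r. (grad has_derivative H y) (at y)"
    and cH: "\<forall>v. continuous_on (ball x r) (\<lambda>y. H y v)"
    using C2 unfolding C2_on_def by blast
  have gnz: "grad y \<noteq> 0" if y: "y \<in> ball x r" for y
  proof
    assume "grad y = 0"
    moreover have "(\<phi> has_derivative (\<lambda>h. grad y \<bullet> h)) (at y)" using dphi y by blast
    ultimately have "(\<phi> has_derivative (\<lambda>h. 0)) (at y)" by simp
    then show False using nz y by blast
  qed
  have bs: "bsetup \<Omega> x r \<phi> grad H"
    by (rule bsetup.intro) (use r dphi dgrad cH gnz Oeq assms(4) False in auto)
  obtain M where M: "M \<ge> 0" "\<forall>y\<in>cball x (r/2). \<forall>h. norm (H y h) \<le> M * norm h"
    using bsetup.Hbound[OF bs] by blast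
  have bs2: "bsetup2 \<Omega> x r \<phi> grad H M"
    by (intro bsetup2.intro bsetup2_axioms.intro bs) (use M in auto)
  show ?thesis by (rule bsetup2.key_b[OF bs2])
qed

lemma ac_lip:
  assumes ac: "absolutely_continuous_on_interval a b \<gamma>"
    and L: "L \<ge> 0" "\<And>u w. norm (\<Phi> u - \<Phi> w) \<le> L * norm (u - w)"
  shows "absolutely_continuous_on_interval a b (\<Phi> \<circ> \<gamma>)"
  unfolding absolutely_continuous_on_interval_def
proof (intro allI impI)
  fix e :: real assume e: "e > 0"
  then have "e / (L + 1) > 0" using L by simp
  then obtain d where d: "d > 0" and dd: "\<forall>D::(real \<times> real) set.
       finite D \<and>
       (\<forall>(u,v)\<in>D. a \<le> u \<and> u \<le> v \<and> v \<le> b) \<and>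
       (\<forall>(u,v)\<in>D. \<forall>(u',v')\<in>D. (u,v) \<noteq> (u',v') \<longrightarrow> {u<..<v} \<inter> {u'<..<v'} = {}) \<and>
       (\<Sum>(u,v)\<in>D. v - u) < d
       \<longrightarrow> (\<Sum>(u,v)\<in>D. norm (\<gamma> v - \<gamma> u)) < e / (L + 1)"
    using ac unfolding absolutely_continuous_on_interval_def by meson
  show "\<exists>d>0. \<forall>D::(real \<times> real) set.
       finite D \<and>
       (\<forall>(u,v)\<in>D. a \<le> u \<and> u \<le> v \<and> v \<le> b) \<and>
       (\<forall>(u,v)\<in>D. \<forall>(u',v')\<in>D. (u,v) \<noteq> (u',v') \<longrightarrow> {u<..<v} \<inter> {u'<..<v'} = {}) \<and>
       (\<Sum>(u,v)\<in>D. v - u) < d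
       \<longrightarrow> (\<Sum>(u,v)\<in>D. norm ((\<Phi> \<circ> \<gamma>) v - (\<Phi> \<circ> \<gamma>) u)) < e"
  proof (intro exI[of _ d] conjI allI impI)
    fix D :: "(real \<times> real) set"
    assume H: "finite D \<and>
       (\<forall>(u,v)\<in>D. a \<le> u \<and> u \<le> v \<and> v \<le> b) \<and>
       (\<forall>(u,v)\<in>D. \<forall>(u',v')\<in>D. (u,v) \<noteq> (u',v') \<longrightarrow> {u<..<v} \<inter> {u'<..<v'} = {}) \<and>
       (\<Sum>(u,v)\<in>D. v - u) < d"
    then have s: "(\<Sum>(u,v)\<in>D. norm (\<gamma> v - \<gamma> u)) < e / (L + 1)" using dd by blast
    have "(\<Sum>(u,v)\<in>D. norm ((\<Phi> \<circ> \<gamma>) v - (\<Phi> \<circ> \<gamma>) u)) \<le> (\<Sum>(u,v)\<in>D. L * norm (\<gamma> v - \<gamma> u))"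
      by (intro sum_mono) (auto simp: L)
    also have "\<dots> = L * (\<Sum>(u,v)\<in>D. norm (\<gamma> v - \<gamma> u))"
      by (simp add: sum_distrib_left case_prod_unfold)
    also have "\<dots> \<le> L * (e / (L + 1))" using s L by (intro mult_left_mono) auto
    also have "\<dots> < e" using e L by (simp add: field_simps)
    finally show "(\<Sum>(u,v)\<in>D. norm ((\<Phi> \<circ> \<gamma>) v - (\<Phi> \<circ> \<gamma>) u)) < e" .
  qed (use d in auto)
qed

lemma ac_const: "absolutely_continuous_on_interval a b (\<lambda>t. c)"
  unfolding absolutely_continuous_on_interval_def by (auto intro: exI[of _ 1])

theorem proposition3p1:
  fixes \<Omega> :: "'a::euclidean_space set" and T :: real
    and xs :: "nat \<Rightarrow> 'a" and x :: 'a and \<gamma> :: "real \<Rightarrow> 'a"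
  assumes "T > 0"
    and "open \<Omega>" and "bounded \<Omega>" and "C2_boundary \<Omega>"
    and "\<forall>i. xs i \<in> closure \<Omega>" and "xs \<longlonglongrightarrow> x"
    and "\<gamma> \<in> Gamma T \<Omega>" and "\<gamma> 0 = x"
  shows "\<exists>\<gamma>s :: nat \<Rightarrow> real \<Rightarrow> 'a.
           (\<forall>i. \<gamma>s i \<in> Gamma T \<Omega> \<and> \<gamma>s i 0 = xs i) \<and>
           uniform_limit {0..T} \<gamma>s \<gamma> sequentially \<and>
           (AE t in lebesgue_on {0..T}.
              (\<lambda>i. vector_derivative (\<gamma>s i) (at t)) \<longlonglongrightarrow> vector_derivative \<gamma> (at t)) \<and>
           (\<exists>C\<ge>0. \<forall>i. AE t in lebesgue_on {0..T}.
              norm (vector_derivative (\<gamma>s i) (at t)) \<le> C * norm (vector_derivative \<gamma> (at t)))"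
proof -
  note xs = assms(5) and lim = assms(6)
  have x: "x \<in> closure \<Omega>"
    using closed_sequentially[OF closed_closure] xs lim by blast
  obtain \<epsilon> C where \<epsilon>: "\<epsilon> > 0" and C: "C \<ge> 0" and K: "\<forall>v. norm v < \<epsilon> \<and> x + v \<in> closure \<Omega> \<longrightarrow>
    (\<exists>\<Phi> D. \<Phi> x = x + v \<and> (\<forall>y\<in>closure \<Omega>. \<Phi> y \<in> closure \<Omega>) \<and>
        (\<forall>y. (\<Phi> has_derivative D y) (at y)) \<and>
        (\<forall>y h. norm (D y h - h) \<le> C * norm v * norm h) \<and>
        (\<forall>y. norm (\<Phi> y - y) \<le> C * norm v))"
    using key[OF assms(2,3,4) x] by blast
  define Pr where "Pr v \<Phi> D \<longleftrightarrow> \<Phi> x = x + v \<and> (\<forall>y\<in>closure \<Omega>. \<Phi> y \<in> closure \<Omega>) \<and>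
        (\<forall>y. (\<Phi> has_derivative D y) (at y)) \<and>
        (\<forall>y h. norm (D y h - h) \<le> C * norm v * norm h) \<and>
        (\<forall>y. norm (\<Phi> y - y) \<le> C * norm v)" for v :: 'a and \<Phi> :: "'a \<Rightarrow> 'a" and D
  have "\<forall>v. \<exists>p. norm v < \<epsilon> \<and> x + v \<in> closure \<Omega> \<longrightarrow> Pr v (fst p) (snd p)"
    using K unfolding Pr_def by fastforce
  then obtain pf where pf: "\<And>v. norm v < \<epsilon> \<Longrightarrow> x + v \<in> closure \<Omega> \<Longrightarrow> Pr v (fst (pf v)) (snd (pf v))"
    by metis
  define \<delta> where "\<delta> = min \<epsilon> (1 / (2 * C + 2))"
  have \<delta>0: "\<delta> > 0" using \<epsilon> C by (simp add: \<delta>_def)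
  have "\<forall>\<^sub>F i in sequentially. dist (xs i) x < \<delta>" using lim \<delta>0 by (simp add: tendsto_iff)
  then obtain N where N: "\<And>i. i \<ge> N \<Longrightarrow> norm (xs i - x) < \<delta>"
    by (auto simp: eventually_sequentially dist_norm)
  define F where "F i = fst (pf (xs i - x))" for i
  define G where "G i = snd (pf (xs i - x))" for i
  define c where "c i = C * norm (xs i - x)" for i
  have PrI: "Pr (xs i - x) (F i) (G i)" if "i \<ge> N" for i
    unfolding F_def G_def
    by (rule pf) (use N[OF that] xs \<delta>_def in auto)
  have c_le: "c i \<le> 1/2" "c i \<ge> 0" if "i \<ge> N" for i
  proof -
    have "norm (xs i - x) \<le> 1 / (2 * C + 2)" using N[OF that] \<delta>_def by simp
    then have "C * norm (xs i - x) \<le> C * (1 / (2 * C + 2))" using C by (intro mult_left_mono) auto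
    also have "\<dots> \<le> 1/2" using C by (simp add: field_simps)
    finally show "c i \<le> 1/2" by (simp add: c_def)
    show "c i \<ge> 0" using C by (simp add: c_def)
  qed
  have pertI: "pert (F i) (G i) (c i)" if "i \<ge> N" for i
    using PrI[OF that] c_le[OF that] unfolding Pr_def pert_def c_def by (auto simp: mult.assoc)
  define \<gamma>s where "\<gamma>s i = (if N \<le> i then F i \<circ> \<gamma> else (\<lambda>t. xs i))" for i
  have ac\<gamma>: "absolutely_continuous_on_interval 0 T \<gamma>" and cl\<gamma>: "\<forall>t\<in>{0..T}. \<gamma> t \<in> closure \<Omega>"
    using assms(7) by (auto simp: Gamma_def)
  have c0: "c \<longlonglongrightarrow> 0"
  proof -
    have "(\<lambda>i. C * norm (xs i - x)) \<longlonglongrightarrow> C * norm (x - x)"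
      by (intro tendsto_intros lim)
    moreover have "c = (\<lambda>i. C * norm (xs i - x))" by (simp add: fun_eq_iff c_def)
    ultimately show ?thesis by simp
  qed
  have P1: "\<gamma>s i \<in> Gamma T \<Omega> \<and> \<gamma>s i 0 = xs i" for i
  proof (cases "N \<le> i")
    case True
    interpret pert "F i" "G i" "c i" by (rule pertI[OF True])
    have "absolutely_continuous_on_interval 0 T (F i \<circ> \<gamma>)"
    proof (rule ac_lip[OF ac\<gamma>, of "1 + c i"])
      show "0 \<le> 1 + c i" using c_le[OF True] by simp
    qed (rule lip)
    moreover have "\<forall>t\<in>{0..T}. (F i \<circ> \<gamma>) t \<in> closure \<Omega>"
      using PrI[OF True] cl\<gamma> unfolding Pr_def by auto
    moreover have "(F i \<circ> \<gamma>) 0 = xs i" using PrI[OF True] assms(8) unfolding Pr_def by simp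
    ultimately show ?thesis using True by (simp add: \<gamma>s_def Gamma_def)
  next
    case False
    then show ?thesis using xs by (simp add: \<gamma>s_def Gamma_def ac_const)
  qed
  have P2: "uniform_limit {0..T} \<gamma>s \<gamma> sequentially"
    unfolding uniform_limit_iff
  proof (intro allI impI)
    fix e :: real assume e: "e > 0"
    have "\<forall>\<^sub>F i in sequentially. c i < e" using c0 e by (rule order_tendstoD(2))
    moreover have "\<forall>\<^sub>F i in sequentially. N \<le> i" by (rule eventually_ge_at_top)
    ultimately show "\<forall>\<^sub>F i in sequentially. \<forall>t\<in>{0..T}. dist (\<gamma>s i t) (\<gamma> t) < e"
    proof eventually_elim
      case (elim i)
      show ?case
      proof
        fix t assume "t \<in> {0..T}"
        have "dist (\<gamma>s i t) (\<gamma> t) = norm (F i (\<gamma> t) - \<gamma> t)" using elim by (simp add: \<gamma>s_def dist_norm)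
        also have "\<dots> \<le> c i" using PrI[of i] elim unfolding Pr_def c_def by auto
        finally show "dist (\<gamma>s i t) (\<gamma> t) < e" using elim by simp
      qed
    qed
  qed
  have vd: "vector_derivative (\<gamma>s i) (at t) = G i (\<gamma> t) (vector_derivative \<gamma> (at t))"
    if "N \<le> i" "\<gamma> differentiable (at t)" for i t
  proof -
    interpret pert "F i" "G i" "c i" by (rule pertI[OF that(1)])
    have "((F i \<circ> \<gamma>) has_vector_derivative G i (\<gamma> t) (vector_derivative \<gamma> (at t))) (at t)"
      by (rule vd_diff) (use that(2) vector_derivative_works in blast)
    then show ?thesis using that(1) by (simp add: \<gamma>s_def vector_derivative_at)
  qed
  have vdn: "vector_derivative (\<gamma>s i) (at t) = vector_derivative \<gamma> (at t)"
    if "N \<le> i" "\<not> \<gamma> differentiable (at t)" for i t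
  proof -
    interpret pert "F i" "G i" "c i" by (rule pertI[OF that(1)])
    show ?thesis using vd_nondiff[OF that(2)] that(1) by (simp add: \<gamma>s_def)
  qed
  have P3: "(\<lambda>i. vector_derivative (\<gamma>s i) (at t)) \<longlonglongrightarrow> vector_derivative \<gamma> (at t)" for t
  proof (cases "\<gamma> differentiable (at t)")
    case True
    define w where "w = vector_derivative \<gamma> (at t)"
    have "(\<lambda>i. vector_derivative (\<gamma>s i) (at t) - w) \<longlonglongrightarrow> 0"
    proof (rule Lim_null_comparison)
      show "\<forall>\<^sub>F i in sequentially. norm (vector_derivative (\<gamma>s i) (at t) - w) \<le> c i * norm w"
        using eventually_ge_at_top[of N]
      proof eventually_elim
        case (elim i)
        interpret pert "F i" "G i" "c i" by (rule pertI[OF elim])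
        show ?case using vd[OF elim True] dD by (simp add: w_def)
      qed
      show "(\<lambda>i. c i * norm w) \<longlonglongrightarrow> 0" using tendsto_mult[OF c0 tendsto_const[of "norm w"]] by simp
    qed
    then show ?thesis unfolding w_def by (rule LIM_zero_cancel)
  next
    case False
    have "\<forall>\<^sub>F i in sequentially. vector_derivative (\<gamma>s i) (at t) = vector_derivative \<gamma> (at t)"
      using eventually_ge_at_top[of N] by eventually_elim (use vdn False in auto)
    then show ?thesis by (rule tendsto_eventually)
  qed
  have P4: "norm (vector_derivative (\<gamma>s i) (at t)) \<le> 2 * norm (vector_derivative \<gamma> (at t))" for i t
  proof (cases "N \<le> i")
    case True
    interpret pert "F i" "G i" "c i" by (rule pertI[OF True])
    show ?thesis
    proof (cases "\<gamma> differentiable (at t)")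
      case True
      have "norm (G i (\<gamma> t) (vector_derivative \<gamma> (at t))) \<le> (1 + c i) * norm (vector_derivative \<gamma> (at t))"
        by (rule Dbound)
      also have "\<dots> \<le> 2 * norm (vector_derivative \<gamma> (at t))"
        using c_le[OF \<open>N \<le> i\<close>] by (intro mult_right_mono) auto
      finally show ?thesis using vd[OF \<open>N \<le> i\<close> True] by simp
    next
      case False
      then show ?thesis using vdn[OF \<open>N \<le> i\<close> False] by simp
    qed
  next
    case False
    then show ?thesis by (simp add: \<gamma>s_def)
  qed
  show ?thesis
  proof (intro exI[of _ \<gamma>s] conjI allI)
    show "\<gamma>s i \<in> Gamma T \<Omega>" "\<gamma>s i 0 = xs i" for i using P1 by auto
    show "uniform_limit {0..T} \<gamma>s \<gamma> sequentially" by (rule P2)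
    show "AE t in lebesgue_on {0..T}. (\<lambda>i. vector_derivative (\<gamma>s i) (at t)) \<longlonglongrightarrow> vector_derivative \<gamma> (at t)"
      using P3 by simp
    show "\<exists>C\<ge>0. \<forall>i. AE t in lebesgue_on {0..T}.
              norm (vector_derivative (\<gamma>s i) (at t)) \<le> C * norm (vector_derivative \<gamma> (at t))"
      using P4 by (intro exI[of _ 2]) auto
  qed
qed

end
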